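(* Let $R$ be a commutative local ring whose maximal ideal $\mathfrak{m}$ is principal with $\mathfrak{m}^2 = 0$, and fix a generator $r$ of $\mathfrak{m}$. Let $X$ be a perfect chain complex over $R$. Then there is an isomorphism of chain complexes $X \cong P \oplus Q$, where $P$ is acyclic and $Q$ is isomorphic to a finite direct sum of complexes of the form $\Sigma^i E_j$ with $i, j \geq 0$.
   Context: Chain complexes are non-negatively graded chain complexes of $R$-modules, with differentials lowering degree. A chain complex is perfect if it consists of projective modules in each degree and $\bigoplus_i X_i$ is finitely generated. Acyclic means all homology groups vanish. For integers $i, j \geq 0$, $\Sigma^i E_j$ is the complex with $(\Sigma^i E_j)_n = R$ for $i \leq n \leq i+j$ and $0$ otherwise, with every differential $R \to R$ given by multiplication by $(-1)^i r$ (the isomorphism type does not depend on the choice of $r$). In particular $E_j = \Sigma^0 E_j$ has $R$ in degrees $0, \dots, j$ with differentials multiplication by $r$. *)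

theory Defs
  imports Complex_Main "HOL-Library.Function_Algebras"
begin

definition is_ideal :: "'a::comm_ring_1 set \<Rightarrow> bool" where
  "is_ideal I \<longleftrightarrow> 0 \<in> I \<and> (\<forall>x\<in>I. \<forall>y\<in>I. x + y \<in> I) \<and> (\<forall>a. \<forall>x\<in>I. a * x \<in> I)"

definition maximal_ideal :: "'a::comm_ring_1 set \<Rightarrow> bool" where
  "maximal_ideal M \<longleftrightarrow> is_ideal M \<and> M \<noteq> UNIV \<and>
     (\<forall>J. is_ideal J \<and> M \<subseteq> J \<longrightarrow> J = M \<or> J = UNIV)"

definition linear_on :: "('a::comm_ring_1 \<Rightarrow> 'm::ab_group_add \<Rightarrow> 'm) \<Rightarrow>
    ('a \<Rightarrow> 'n::ab_group_add \<Rightarrow> 'n) \<Rightarrow> 'm set \<Rightarrow> ('m \<Rightarrow> 'n) \<Rightarrow> bool" where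
  "linear_on s1 s2 S f \<longleftrightarrow> (\<forall>x\<in>S. \<forall>y\<in>S. f (x + y) = f x + f y) \<and>
     (\<forall>c. \<forall>x\<in>S. f (s1 c x) = s2 c (f x))"

definition fin_gen :: "('a::comm_ring_1 \<Rightarrow> 'm::ab_group_add \<Rightarrow> 'm) \<Rightarrow> 'm set \<Rightarrow> bool" where
  "fin_gen s M \<longleftrightarrow> (\<exists>G. finite G \<and> G \<subseteq> M \<and> module.span s G = M)"

text \<open>Projective module: a direct summand of a free module. Concretely, the canonical
  surjection from the free module on the elements of M (finitely supported functions
  M \<Rightarrow> R) onto M, f \<mapsto> sum of f(m) m, admits an R-linear section.\<close>
definition projective_mod :: "('a::comm_ring_1 \<Rightarrow> 'm::ab_group_add \<Rightarrow> 'm) \<Rightarrow> 'm set \<Rightarrow> bool" where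
  "projective_mod s M \<longleftrightarrow> module.subspace s M \<and>
     (\<exists>sec :: 'm \<Rightarrow> 'm \<Rightarrow> 'a.
        linear_on s (\<lambda>c f. \<lambda>m. c * f m) M sec \<and>
        (\<forall>x\<in>M. finite {m. sec x m \<noteq> 0} \<and> {m. sec x m \<noteq> 0} \<subseteq> M \<and>
                 (\<Sum>m\<in>{m. sec x m \<noteq> 0}. s (sec x m) m) = x))"

text \<open>A non-negatively graded chain complex inside an ambient module:
  X n is the module in degree n, d n : X (n+1) \<rightarrow> X n is the differential.\<close>
definition chain_complex :: "('a::comm_ring_1 \<Rightarrow> 'm::ab_group_add \<Rightarrow> 'm) \<Rightarrow>
    (nat \<Rightarrow> 'm set) \<Rightarrow> (nat \<Rightarrow> 'm \<Rightarrow> 'm) \<Rightarrow> bool" where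
  "chain_complex s X d \<longleftrightarrow> module s \<and> (\<forall>n. module.subspace s (X n)) \<and>
     (\<forall>n. \<forall>x\<in>X (Suc n). d n x \<in> X n) \<and>
     (\<forall>n. linear_on s s (X (Suc n)) (d n)) \<and>
     (\<forall>n. \<forall>x\<in>X (Suc (Suc n)). d n (d (Suc n) x) = 0)"

text \<open>Perfect: projective in each degree and the direct sum of all X n is finitely
  generated (i.e. each X n is finitely generated and almost all X n vanish).\<close>
definition perfect_complex :: "('a::comm_ring_1 \<Rightarrow> 'm::ab_group_add \<Rightarrow> 'm) \<Rightarrow>
    (nat \<Rightarrow> 'm set) \<Rightarrow> (nat \<Rightarrow> 'm \<Rightarrow> 'm) \<Rightarrow> bool" where
  "perfect_complex s X d \<longleftrightarrow> chain_complex s X d \<and> (\<forall>n. projective_mod s (X n)) \<and>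
     (\<forall>n. fin_gen s (X n)) \<and> (\<exists>N. \<forall>n\<ge>N. X n = {0})"

definition cycles :: "(nat \<Rightarrow> 'm set) \<Rightarrow> (nat \<Rightarrow> 'm \<Rightarrow> 'm::zero) \<Rightarrow> nat \<Rightarrow> 'm set" where
  "cycles X d n = (if n = 0 then X 0 else {x \<in> X n. d (n - 1) x = 0})"

definition chain_acyclic :: "(nat \<Rightarrow> 'm set) \<Rightarrow> (nat \<Rightarrow> 'm \<Rightarrow> 'm::zero) \<Rightarrow> bool" where
  "chain_acyclic X d \<longleftrightarrow> (\<forall>n. cycles X d n \<subseteq> d n ` X (Suc n))"

definition subcomplex :: "('a::comm_ring_1 \<Rightarrow> 'm::ab_group_add \<Rightarrow> 'm) \<Rightarrow>
    (nat \<Rightarrow> 'm set) \<Rightarrow> (nat \<Rightarrow> 'm set) \<Rightarrow> (nat \<Rightarrow> 'm \<Rightarrow> 'm) \<Rightarrow> bool" where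
  "subcomplex s P X d \<longleftrightarrow> (\<forall>n. module.subspace s (P n) \<and> P n \<subseteq> X n) \<and>
     (\<forall>n. d n ` P (Suc n) \<subseteq> P n)"

text \<open>X is the (internal) direct sum of the subcomplexes P and Q; this is the same as an
  isomorphism of chain complexes X \<cong> P \<oplus> Q (with the restricted differentials).\<close>
definition complex_direct_sum :: "('a::comm_ring_1 \<Rightarrow> 'm::ab_group_add \<Rightarrow> 'm) \<Rightarrow>
    (nat \<Rightarrow> 'm set) \<Rightarrow> (nat \<Rightarrow> 'm \<Rightarrow> 'm) \<Rightarrow> (nat \<Rightarrow> 'm set) \<Rightarrow> (nat \<Rightarrow> 'm set) \<Rightarrow> bool" where
  "complex_direct_sum s X d P Q \<longleftrightarrow> subcomplex s P X d \<and> subcomplex s Q X d \<and>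
     (\<forall>n. P n \<inter> Q n = {0} \<and> {p + q | p q. p \<in> P n \<and> q \<in> Q n} = X n)"

definition chain_iso :: "('a::comm_ring_1 \<Rightarrow> 'm::ab_group_add \<Rightarrow> 'm) \<Rightarrow>
    (nat \<Rightarrow> 'm set) \<Rightarrow> (nat \<Rightarrow> 'm \<Rightarrow> 'm) \<Rightarrow>
    ('a \<Rightarrow> 'n::ab_group_add \<Rightarrow> 'n) \<Rightarrow> (nat \<Rightarrow> 'n set) \<Rightarrow> (nat \<Rightarrow> 'n \<Rightarrow> 'n) \<Rightarrow> bool" where
  "chain_iso s1 X dX s2 Y dY \<longleftrightarrow> (\<exists>\<phi> :: nat \<Rightarrow> 'm \<Rightarrow> 'n.
     (\<forall>n. bij_betw (\<phi> n) (X n) (Y n) \<and> linear_on s1 s2 (X n) (\<phi> n)) \<and>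
     (\<forall>n. \<forall>x\<in>X (Suc n). \<phi> n (dX n x) = dY n (\<phi> (Suc n) x)))"

text \<open>The ambient module is R^\<nat> = (nat \<Rightarrow> 'a) with pointwise scalar multiplication.\<close>
definition fscale :: "'a::comm_ring_1 \<Rightarrow> (nat \<Rightarrow> 'a) \<Rightarrow> (nat \<Rightarrow> 'a)" where
  "fscale c f = (\<lambda>k. c * f k)"

text \<open>The direct sum of \<Sigma>^(ii k) E_(jj k) for k < N: in degree n, the k-th summand is R if
  ii k \<le> n \<le> ii k + jj k and 0 otherwise.\<close>
definition sumE_mod :: "nat \<Rightarrow> (nat \<Rightarrow> nat) \<Rightarrow> (nat \<Rightarrow> nat) \<Rightarrow> nat \<Rightarrow> (nat \<Rightarrow> 'a::comm_ring_1) set" where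
  "sumE_mod N ii jj n = {f. \<forall>k. f k \<noteq> 0 \<longrightarrow> k < N \<and> ii k \<le> n \<and> n \<le> ii k + jj k}"

text \<open>Differential from degree n+1 to degree n: on the k-th summand it is multiplication by
  (-1)^(ii k) * r when both degrees lie in the range of that summand, and 0 otherwise.\<close>
definition sumE_diff :: "'a::comm_ring_1 \<Rightarrow> (nat \<Rightarrow> nat) \<Rightarrow> nat \<Rightarrow> (nat \<Rightarrow> 'a) \<Rightarrow> (nat \<Rightarrow> 'a)" where
  "sumE_diff r ii n f = (\<lambda>k. if ii k \<le> n then (-1) ^ (ii k) * r * f k else 0)"

end

theory Submission
  imports Defs
begin

locale setting = module s for s :: "'a::comm_ring_1 \<Rightarrow> 'm::ab_group_add \<Rightarrow> 'm" +
  fixes mm :: "'a set" and r :: 'a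
  assumes maxl: "maximal_ideal mm"
    and princ: "mm = {r * a | a. True}"
    and sqz: "\<forall>x\<in>mm. \<forall>y\<in>mm. x * y = 0"
begin

lemma mm_iff: "x \<in> mm \<longleftrightarrow> (\<exists>a. x = r * a)"
  using princ by auto

lemma r_in: "r \<in> mm" by (simp add: mm_iff) (metis mult_1_right)

lemma rr: "r * r = 0" using sqz r_in by auto

lemma r_times_mm: "x \<in> mm \<Longrightarrow> r * x = 0"
  using sqz r_in by auto

lemma mm_add: "x \<in> mm \<Longrightarrow> y \<in> mm \<Longrightarrow> x + y \<in> mm"
  by (auto simp: mm_iff) (metis distrib_left)

lemma mm_mult: "x \<in> mm \<Longrightarrow> y * x \<in> mm"
  by (auto simp: mm_iff) (metis mult.left_commute)

lemma mm_mult2: "x \<in> mm \<Longrightarrow> x * y \<in> mm"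
  by (metis mm_mult mult.commute)

lemma mm_neg: "x \<in> mm \<Longrightarrow> - x \<in> mm"
  by (auto simp: mm_iff) (metis mult_minus_right)

lemma mm_diff: "x \<in> mm \<Longrightarrow> y \<in> mm \<Longrightarrow> x - y \<in> mm"
  by (metis diff_conv_add_uminus mm_add mm_neg)

lemma one_notin: "1 \<notin> mm"
proof
  assume "1 \<in> mm"
  then have "\<forall>a. a \<in> mm" using mm_mult[of 1] by (metis mult_1_right)
  then show False using maxl unfolding maximal_ideal_def by auto
qed

lemma unit_notin: "a * b = 1 \<Longrightarrow> a \<notin> mm"
  using mm_mult2 one_notin by metis

lemma notin_unit:
  assumes "a \<notin> mm" shows "\<exists>b. a * b = 1"
proof -
  define J where "J = {x + a * y | x y. x \<in> mm}"
  have "0 \<in> mm" using r_in mm_mult[of r 0] by simp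
  have idJ: "is_ideal J" unfolding is_ideal_def J_def
  proof (intro conjI ballI allI)
    show "0 \<in> {x + a * y |x y. x \<in> mm}" using \<open>0 \<in> mm\<close> by (intro CollectI exI[of _ 0] exI[of _ 0]) simp
  next
    fix u v assume "u \<in> {x + a * y |x y. x \<in> mm}" "v \<in> {x + a * y |x y. x \<in> mm}"
    then obtain x y x' y' where "u = x + a*y" "v = x' + a * y'" "x \<in> mm" "x' \<in> mm" by auto
    then show "u + v \<in> {x + a * y |x y. x \<in> mm}"
      by (intro CollectI exI[of _ "x+x'"] exI[of _ "y+y'"]) (auto simp: mm_add algebra_simps)
  next
    fix c u assume "u \<in> {x + a * y |x y. x \<in> mm}"
    then obtain x y where "u = x + a*y" "x \<in> mm" by auto
    then show "c * u \<in> {x + a * y |x y. x \<in> mm}"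
      by (intro CollectI exI[of _ "c*x"] exI[of _ "c*y"]) (auto simp: mm_mult algebra_simps)
  qed
  have "mm \<subseteq> J" unfolding J_def proof
    fix z assume "z \<in> mm" then show "z \<in> {x + a * y |x y. x \<in> mm}" by (intro CollectI exI[of _ z] exI[of _ 0]) simp
  qed
  have "a \<in> J" unfolding J_def using \<open>0 \<in> mm\<close> by (intro CollectI exI[of _ 0] exI[of _ 1]) simp
  then have "J \<noteq> mm" using assms by auto
  then have "J = UNIV" using maxl idJ \<open>mm \<subseteq> J\<close> unfolding maximal_ideal_def by blast
  then obtain x y where xy: "1 = x + a * y" "x \<in> mm" unfolding J_def by blast
  have "x * x = 0" using sqz xy by auto
  have "a * y = 1 - x" using xy by (simp add: algebra_simps)
  then have "a * (y * (1 + x)) = (1 - x) * (1 + x)" by (metis mult.assoc)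
  also have "\<dots> = 1" using \<open>x*x = 0\<close> by (simp add: algebra_simps)
  finally show ?thesis by blast
qed

lemma ann_r: "r \<noteq> 0 \<Longrightarrow> r * a = 0 \<Longrightarrow> a \<in> mm"
  using notin_unit by (metis mult.assoc mult_1_right mult_zero_left)


lemma mm_sum: "(\<And>i. i \<in> I \<Longrightarrow> f i \<in> mm) \<Longrightarrow> sum f I \<in> mm"
proof (induct I rule: infinite_finite_induct)
  case (infinite A) then show ?case using mm_mult[OF r_in, of 0] by simp
next
  case empty then show ?case using mm_mult[OF r_in, of 0] by simp
next
  case (insert x F) then show ?case by (simp add: mm_add)
qed

definition lfun :: "'m set \<Rightarrow> ('m \<Rightarrow> 'a) \<Rightarrow> bool" where
  "lfun M \<phi> \<longleftrightarrow> (\<forall>x\<in>M. \<forall>y\<in>M. \<phi> (x+y) = \<phi> x + \<phi> y) \<and> (\<forall>c. \<forall>x\<in>M. \<phi> (s c x) = c * \<phi> x)"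

definition FPc :: "'m set \<Rightarrow> nat \<Rightarrow> bool" where
  "FPc M k \<longleftrightarrow> subspace M \<and> (\<exists>(G::'m set) e c. finite G \<and> card G = k \<and> (\<forall>g\<in>G. e g \<in> M) \<and>
     (\<forall>g\<in>G. lfun M (\<lambda>x. c x g)) \<and> (\<forall>x\<in>M. (\<Sum>g\<in>G. s (c x g) (e g)) = x))"

lemma lfun_add: "lfun M \<phi> \<Longrightarrow> x \<in> M \<Longrightarrow> y \<in> M \<Longrightarrow> \<phi> (x + y) = \<phi> x + \<phi> y"
  by (simp add: lfun_def)
lemma lfun_scale: "lfun M \<phi> \<Longrightarrow> x \<in> M \<Longrightarrow> \<phi> (s c x) = c * \<phi> x"
  by (simp add: lfun_def)
lemma lfun_zero: "subspace M \<Longrightarrow> lfun M \<phi> \<Longrightarrow> \<phi> 0 = 0"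
  using lfun_scale[of M \<phi> 0 0] subspace_0 by simp
lemma lfun_neg: "subspace M \<Longrightarrow> lfun M \<phi> \<Longrightarrow> x \<in> M \<Longrightarrow> \<phi> (- x) = - \<phi> x"
  using lfun_scale[of M \<phi> x "-1"] by simp
lemma lfun_diff: "subspace M \<Longrightarrow> lfun M \<phi> \<Longrightarrow> x \<in> M \<Longrightarrow> y \<in> M \<Longrightarrow> \<phi> (x - y) = \<phi> x - \<phi> y"
  using lfun_add[of M \<phi> x "-y"] lfun_neg[of M \<phi> y] subspace_neg by simp
lemma lfun_sum: "subspace M \<Longrightarrow> lfun M \<phi> \<Longrightarrow> (\<And>i. i \<in> I \<Longrightarrow> f i \<in> M) \<Longrightarrow> \<phi> (sum f I) = (\<Sum>i\<in>I. \<phi> (f i))"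
proof (induct I rule: infinite_finite_induct)
  case (infinite A) then show ?case using lfun_zero by simp
next
  case empty then show ?case using lfun_zero by simp
next
  case (insert x F) then show ?case using lfun_add[of M \<phi> "f x" "sum f F"] subspace_sum[of M F f] by simp
qed
lemma lfun_subset: "lfun M \<phi> \<Longrightarrow> N \<subseteq> M \<Longrightarrow> lfun N \<phi>"
  unfolding lfun_def by blast

lemma FPcD:
  assumes "FPc M k"
  obtains G :: "'m set" and e c where "finite G" "card G = k" "\<forall>g\<in>G. e g \<in> M" "\<forall>g\<in>G. lfun M (\<lambda>x. c x g)"
    "\<forall>x\<in>M. (\<Sum>g\<in>G. s (c x g) (e g)) = x" "subspace M"
proof -
  have sub: "subspace M" using assms unfolding FPc_def by (rule conjunct1)
  have "\<exists>(G::'m set) e c. finite G \<and> card G = k \<and> (\<forall>g\<in>G. e g \<in> M) \<and>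
     (\<forall>g\<in>G. lfun M (\<lambda>x. c x g)) \<and> (\<forall>x\<in>M. (\<Sum>g\<in>G. s (c x g) (e g)) = x)"
    using assms unfolding FPc_def by (rule conjunct2)
  then show ?thesis
  proof (elim exE conjE)
    fix G :: "'m set" and e c assume "finite G" "card G = k" "\<forall>g\<in>G. e g \<in> M" "\<forall>g\<in>G. lfun M (\<lambda>x. c x g)"
      "\<forall>x\<in>M. (\<Sum>g\<in>G. s (c x g) (e g)) = x"
    then show ?thesis using sub by (rule that)
  qed
qed

lemma lfun_addc: "\<forall>g\<in>G. lfun M (\<lambda>x. c x g) \<Longrightarrow> g \<in> G \<Longrightarrow> x \<in> M \<Longrightarrow> y \<in> M \<Longrightarrow> c (x+y) g = c x g + c y g"
  unfolding lfun_def by blast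
lemma lfun_scalec: "\<forall>g\<in>G. lfun M (\<lambda>x. c x g) \<Longrightarrow> g \<in> G \<Longrightarrow> x \<in> M \<Longrightarrow> c (s a x) g = a * c x g"
  unfolding lfun_def by blast

lemma exists_nonr:
  assumes "subspace M" "M \<noteq> {0}" shows "\<exists>x\<in>M. \<forall>z\<in>M. x \<noteq> s r z"
proof -
  obtain x where x: "x \<in> M" "x \<noteq> 0" using assms subspace_0 by blast
  show ?thesis
  proof (cases "\<forall>z\<in>M. x \<noteq> s r z")
    case True then show ?thesis using x by blast
  next
    case False
    then obtain z where z: "z \<in> M" "x = s r z" by auto
    have "\<forall>w\<in>M. z \<noteq> s r w"
    proof (intro ballI notI)
      fix w assume "w \<in> M" "z = s r w"
      then have "x = s (r*r) w" using z by simp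
      then show False using rr x by simp
    qed
    then show ?thesis using z by blast
  qed
qed

lemma split_fun:
  assumes "FPc M k" "x \<in> M" "\<forall>z\<in>M. x \<noteq> s r z"
  shows "\<exists>\<phi>. lfun M \<phi> \<and> \<phi> x = 1"
proof -
  obtain G :: "'m set" and e c where G: "finite G" "card G = k" "\<forall>g\<in>G. e g \<in> M" "\<forall>g\<in>G. lfun M (\<lambda>x. c x g)"
    "\<forall>x\<in>M. (\<Sum>g\<in>G. s (c x g) (e g)) = x" and sub: "subspace M"
    using assms(1) by (rule FPcD)
  show ?thesis
  proof (cases "\<forall>g\<in>G. c x g \<in> mm")
    case True
    then have "\<forall>g\<in>G. \<exists>b. c x g = r * b" by (simp add: mm_iff)
    then obtain b where b: "\<forall>g\<in>G. c x g = r * b g" by metis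
    have "x = (\<Sum>g\<in>G. s (c x g) (e g))" by (rule G(5)[rule_format, OF assms(2), symmetric])
    also have "\<dots> = (\<Sum>g\<in>G. s (r * b g) (e g))" using b by simp
    also have "\<dots> = s r (\<Sum>g\<in>G. s (b g) (e g))" by (simp add: scale_sum_right)
    finally have "x = s r (\<Sum>g\<in>G. s (b g) (e g))" .
    moreover have "(\<Sum>g\<in>G. s (b g) (e g)) \<in> M" using G(3) sub by (intro subspace_sum subspace_scale) auto
    ultimately show ?thesis using assms(3) by blast
  next
    case False
    then obtain g0 where g0: "g0 \<in> G" "c x g0 \<notin> mm" by blast
    then obtain u where u: "c x g0 * u = 1" using notin_unit by blast
    have "lfun M (\<lambda>y. u * c y g0)" using G(4) g0 unfolding lfun_def by (simp add: algebra_simps)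
    moreover have "u * c x g0 = 1" using u by (simp add: mult.commute)
    ultimately show ?thesis by blast
  qed
qed

lemma lift_fun:
  assumes "FPc M k" "lfun M \<psi>" "\<forall>x\<in>M. \<psi> x \<in> mm"
  shows "\<exists>\<phi>. lfun M \<phi> \<and> (\<forall>x\<in>M. \<psi> x = r * \<phi> x)"
proof -
  obtain G :: "'m set" and e c where G: "finite G" "card G = k" "\<forall>g\<in>G. e g \<in> M" "\<forall>g\<in>G. lfun M (\<lambda>x. c x g)"
    "\<forall>x\<in>M. (\<Sum>g\<in>G. s (c x g) (e g)) = x" and sub: "subspace M"
    using assms(1) by (rule FPcD)
  have "\<forall>g\<in>G. \<exists>a. \<psi> (e g) = r * a" using assms(3) G(3) by (simp add: mm_iff)
  then obtain \<kappa> where \<kappa>: "\<forall>g\<in>G. \<psi> (e g) = r * \<kappa> g" by metis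
  define \<phi> where "\<phi> y = (\<Sum>g\<in>G. c y g * \<kappa> g)" for y
  have "lfun M \<phi>" unfolding lfun_def \<phi>_def
  proof (intro conjI ballI allI)
    fix x y assume "x \<in> M" "y \<in> M"
    then have "(\<Sum>g\<in>G. c (x + y) g * \<kappa> g) = (\<Sum>g\<in>G. c x g * \<kappa> g + c y g * \<kappa> g)"
      using G(4) by (intro sum.cong refl) (simp add: lfun_addc distrib_right)
    then show "(\<Sum>g\<in>G. c (x + y) g * \<kappa> g) = (\<Sum>g\<in>G. c x g * \<kappa> g) + (\<Sum>g\<in>G. c y g * \<kappa> g)"
      by (simp add: sum.distrib)
  next
    fix a x assume "x \<in> M"
    then show "(\<Sum>g\<in>G. c (s a x) g * \<kappa> g) = a * (\<Sum>g\<in>G. c x g * \<kappa> g)"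
      using G(4) by (simp add: lfun_scalec sum_distrib_left mult.assoc cong: sum.cong)
  qed
  moreover have "\<psi> x = r * \<phi> x" if "x \<in> M" for x
  proof -
    have "\<psi> x = \<psi> (\<Sum>g\<in>G. s (c x g) (e g))" using G(5)[rule_format, OF that] by simp
    also have "\<dots> = (\<Sum>g\<in>G. \<psi> (s (c x g) (e g)))"
      using G(3) sub assms(2) by (intro lfun_sum) (auto intro: subspace_scale)
    also have "\<dots> = (\<Sum>g\<in>G. c x g * (r * \<kappa> g))" using G(3) \<kappa> assms(2) by (simp add: lfun_scale)
    also have "\<dots> = r * \<phi> x" unfolding \<phi>_def by (simp add: sum_distrib_left algebra_simps)
    finally show ?thesis .
  qed
  ultimately show ?thesis by blast
qed


lemma fp_expand:
  assumes "\<forall>g\<in>G. e g \<in> M" "\<forall>x\<in>M. (\<Sum>g\<in>G. s (c x g) (e g)) = x" "subspace M" "lfun M \<phi>" "y \<in> M"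
  shows "\<phi> y = (\<Sum>g\<in>G. c y g * \<phi> (e g))"
proof -
  have "\<phi> y = \<phi> (\<Sum>g\<in>G. s (c y g) (e g))" using assms(2,5) by simp
  also have "\<dots> = (\<Sum>g\<in>G. \<phi> (s (c y g) (e g)))"
    using assms by (intro lfun_sum) (auto intro: subspace_scale)
  also have "\<dots> = (\<Sum>g\<in>G. c y g * \<phi> (e g))" using assms(1,4) by (simp add: lfun_scale)
  finally show ?thesis .
qed

lemma split_FP:
  assumes "FPc M k" "lfun M \<phi>" "v \<in> M" "\<phi> v = 1"
  shows "k \<ge> 1 \<and> FPc {x\<in>M. \<phi> x = 0} (k - 1)"
proof -
  obtain G :: "'m set" and e c where G: "finite G" "card G = k" "\<forall>g\<in>G. e g \<in> M" "\<forall>g\<in>G. lfun M (\<lambda>x. c x g)"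
    "\<forall>x\<in>M. (\<Sum>g\<in>G. s (c x g) (e g)) = x" and sub: "subspace M"
    using assms(1) by (rule FPcD)
  have ex: "\<phi> y = (\<Sum>g\<in>G. c y g * \<phi> (e g))" if "y \<in> M" for y
    using fp_expand[OF G(3) G(5) sub assms(2) that] .
  have "\<exists>g0\<in>G. c v g0 \<notin> mm"
  proof (rule ccontr)
    assume "\<not> ?thesis"
    then have "(\<Sum>g\<in>G. c v g * \<phi> (e g)) \<in> mm" by (auto intro!: mm_sum mm_mult2)
    then show False using ex[OF assms(3)] assms(4) one_notin by simp
  qed
  then obtain g0 where g0: "g0 \<in> G" "c v g0 \<notin> mm" by blast
  then obtain u where u: "c v g0 * u = 1" using notin_unit by blast
  have k1: "k \<ge> 1" using G(1,2) g0(1) by (metis One_nat_def Suc_leI card_gt_0_iff empty_iff)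
  define Y where "Y = {x\<in>M. \<phi> x = 0}"
  define e' where "e' g = e g - s (\<phi> (e g)) v" for g
  define c' where "c' y g = c y g - c y g0 * u * c v g" for y g
  define G' where "G' = G - {g0}"
  have key: "(\<Sum>g\<in>G. s (c y g) (e' g)) = y - s (\<phi> y) v" if "y \<in> M" for y
  proof -
    have "(\<Sum>g\<in>G. s (c y g) (e' g)) = (\<Sum>g\<in>G. s (c y g) (e g) - s (c y g * \<phi> (e g)) v)"
      unfolding e'_def by (simp add: scale_right_diff_distrib)
    also have "\<dots> = (\<Sum>g\<in>G. s (c y g) (e g)) - (\<Sum>g\<in>G. s (c y g * \<phi> (e g)) v)"
      by (simp add: sum_subtractf)
    also have "\<dots> = y - s (\<Sum>g\<in>G. c y g * \<phi> (e g)) v"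
      using G(5) that by (simp add: scale_sum_left)
    also have "\<dots> = y - s (\<phi> y) v" using ex[OF that] by simp
    finally show ?thesis .
  qed
  have Gs: "G = insert g0 G'" "g0 \<notin> G'" "finite G'" using g0 G(1) unfolding G'_def by auto
  have v0: "s (c v g0) (e' g0) + (\<Sum>g\<in>G'. s (c v g) (e' g)) = 0"
    using key[OF assms(3)] assms(4) Gs by (simp add: sum.insert)
  have eg0: "e' g0 = - (\<Sum>g\<in>G'. s (u * c v g) (e' g))"
  proof -
    have "s u (s (c v g0) (e' g0) + (\<Sum>g\<in>G'. s (c v g) (e' g))) = 0" using v0 by simp
    then have "s (u * c v g0) (e' g0) + (\<Sum>g\<in>G'. s (u * c v g) (e' g)) = 0"
      by (simp add: scale_right_distrib scale_sum_right)
    moreover have "u * c v g0 = 1" using u by (simp add: mult.commute)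
    ultimately show ?thesis by (simp add: eq_neg_iff_add_eq_0)
  qed
  have subY: "subspace Y" unfolding Y_def subspace_def
    using sub assms(2) lfun_zero[OF sub assms(2)]
    by (auto simp: subspace_0 subspace_add subspace_scale lfun_add lfun_scale)
  have e'Y: "e' g \<in> Y" if "g \<in> G" for g
  proof -
    have "e' g \<in> M" unfolding e'_def using G(3) that sub assms(3) by (auto intro: subspace_diff subspace_scale)
    moreover have "\<phi> (e' g) = 0" unfolding e'_def
      using G(3) that sub assms(3,4) assms(2) subspace_scale[OF sub assms(3)]
      by (simp add: lfun_diff lfun_scale)
    ultimately show ?thesis unfolding Y_def by simp
  qed
  have rep: "(\<Sum>g\<in>G'. s (c' y g) (e' g)) = y" if "y \<in> Y" for y
  proof -
    have yM: "y \<in> M" "\<phi> y = 0" using that unfolding Y_def by auto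
    have "y = (\<Sum>g\<in>G. s (c y g) (e' g))" using key[OF yM(1)] yM(2) by simp
    also have "\<dots> = s (c y g0) (e' g0) + (\<Sum>g\<in>G'. s (c y g) (e' g))" using Gs by (simp add: sum.insert)
    also have "s (c y g0) (e' g0) = - (\<Sum>g\<in>G'. s (c y g0 * u * c v g) (e' g))"
      unfolding eg0 by (simp add: scale_sum_right mult.assoc)
    finally have "y = (\<Sum>g\<in>G'. s (c y g) (e' g)) - (\<Sum>g\<in>G'. s (c y g0 * u * c v g) (e' g))"
      by simp
    also have "\<dots> = (\<Sum>g\<in>G'. s (c' y g) (e' g))"
      unfolding c'_def by (simp add: sum_subtractf scale_left_diff_distrib)
    finally show ?thesis by simp
  qed
  have lc: "lfun Y (\<lambda>x. c' x g)" if "g \<in> G'" for g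
  proof -
    have "g \<in> G" using that unfolding G'_def by auto
    have "Y \<subseteq> M" unfolding Y_def by auto
    moreover have "lfun M (\<lambda>x. c' x g)" unfolding lfun_def c'_def
      using lfun_addc[OF G(4) \<open>g \<in> G\<close>] lfun_addc[OF G(4) g0(1)] lfun_scalec[OF G(4) \<open>g \<in> G\<close>] lfun_scalec[OF G(4) g0(1)]
      by (auto simp: algebra_simps)
    ultimately show ?thesis using lfun_subset by blast
  qed
  have "FPc Y (k - 1)" unfolding FPc_def
  proof (intro conjI subY exI[of _ G'] exI[of _ e'] exI[of _ c'])
    show "finite G'" using Gs by simp
    show "card G' = k - 1" using G(1,2) g0 unfolding G'_def by simp
    show "\<forall>g\<in>G'. e' g \<in> Y" using e'Y unfolding G'_def by auto
    show "\<forall>g\<in>G'. lfun Y (\<lambda>x. c' x g)" using lc by auto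
    show "\<forall>x\<in>Y. (\<Sum>g\<in>G'. s (c' x g) (e' g)) = x" using rep by auto
  qed
  then show ?thesis using k1 unfolding Y_def by simp
qed


lemma init_FP:
  assumes "projective_mod s M" "fin_gen s M"
  shows "\<exists>k. FPc M k"
proof -
  obtain G0 where G0: "finite G0" "G0 \<subseteq> M" "span G0 = M" using assms(2) unfolding fin_gen_def by blast
  have sub: "subspace M" using assms(1) unfolding projective_mod_def by simp
  obtain sec :: "'m \<Rightarrow> 'm \<Rightarrow> 'a" where lin: "linear_on s (\<lambda>c f. \<lambda>m. c * f m) M sec"
    and sec: "\<forall>x\<in>M. finite {m. sec x m \<noteq> 0} \<and> {m. sec x m \<noteq> 0} \<subseteq> M \<and>
                 (\<Sum>m\<in>{m. sec x m \<noteq> 0}. s (sec x m) m) = x"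
    using assms(1) unfolding projective_mod_def by blast
  have "\<forall>m\<in>M. \<exists>u. m = (\<Sum>v\<in>G0. s (u v) v)" using G0 span_finite[OF G0(1)] by auto
  then obtain \<kappa> where \<kappa>: "\<forall>m\<in>M. m = (\<Sum>v\<in>G0. s (\<kappa> m v) v)" by metis
  define supp where "supp x = {m. sec x m \<noteq> 0}" for x
  define c where "c x g = (\<Sum>m\<in>supp x. sec x m * \<kappa> m g)" for x g
  have cT: "c x g = (\<Sum>m\<in>T. sec x m * \<kappa> m g)" if "finite T" "supp x \<subseteq> T" for x g T
    unfolding c_def using that by (intro sum.mono_neutral_left) (auto simp: supp_def)
  have fs: "finite (supp x)" if "x \<in> M" for x using sec that unfolding supp_def by blast
  have secadd: "sec (x + y) m = sec x m + sec y m" if "x \<in> M" "y \<in> M" for x y m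
    using lin that unfolding linear_on_def by (simp add: plus_fun_def)
  have secscale: "sec (s a x) m = a * sec x m" if "x \<in> M" for x a m
    using lin that unfolding linear_on_def by metis
  have lc: "lfun M (\<lambda>x. c x g)" for g
    unfolding lfun_def
  proof (intro conjI ballI allI)
    fix x y assume xy: "x \<in> M" "y \<in> M"
    define T where "T = supp x \<union> supp y \<union> supp (x + y)"
    have T: "finite T" unfolding T_def using fs xy subspace_add[OF sub xy] by auto
    have sx: "supp x \<subseteq> T" and sy: "supp y \<subseteq> T" and sxy: "supp (x+y) \<subseteq> T" unfolding T_def by auto
    have e1: "c (x+y) g = (\<Sum>m\<in>T. sec (x+y) m * \<kappa> m g)" using cT[OF T sxy] .
    have e2: "(\<Sum>m\<in>T. sec (x+y) m * \<kappa> m g) = (\<Sum>m\<in>T. sec x m * \<kappa> m g) + (\<Sum>m\<in>T. sec y m * \<kappa> m g)"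
      using xy by (simp add: secadd distrib_right sum.distrib)
    show "c (x+y) g = c x g + c y g" using e1 e2 cT[OF T sx, of g] cT[OF T sy, of g] by simp
  next
    fix a x assume x: "x \<in> M"
    define T where "T = supp x \<union> supp (s a x)"
    have T: "finite T" unfolding T_def using fs x subspace_scale[OF sub x] by auto
    have sx: "supp x \<subseteq> T" and sax: "supp (s a x) \<subseteq> T" unfolding T_def by auto
    have e1: "c (s a x) g = (\<Sum>m\<in>T. sec (s a x) m * \<kappa> m g)" using cT[OF T sax] .
    have e2: "(\<Sum>m\<in>T. sec (s a x) m * \<kappa> m g) = a * (\<Sum>m\<in>T. sec x m * \<kappa> m g)"
      using x by (simp add: secscale sum_distrib_left mult.assoc)
    show "c (s a x) g = a * c x g" using e1 e2 cT[OF T sx, of g] by simp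
  qed
  have rep: "(\<Sum>g\<in>G0. s (c x g) (id g)) = x" if x: "x \<in> M" for x
  proof -
    have "(\<Sum>g\<in>G0. s (c x g) (id g)) = (\<Sum>g\<in>G0. \<Sum>m\<in>supp x. s (sec x m * \<kappa> m g) g)"
      unfolding c_def by (simp add: scale_sum_left)
    also have "\<dots> = (\<Sum>m\<in>supp x. \<Sum>g\<in>G0. s (sec x m) (s (\<kappa> m g) g))"
      by (subst sum.swap) simp
    also have "\<dots> = (\<Sum>m\<in>supp x. s (sec x m) (\<Sum>g\<in>G0. s (\<kappa> m g) g))"
      by (simp add: scale_sum_right)
    also have "\<dots> = (\<Sum>m\<in>supp x. s (sec x m) m)"
    proof (rule sum.cong[OF refl])
      fix m assume "m \<in> supp x"
      then have "m \<in> M" using sec x unfolding supp_def by blast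
      then show "s (sec x m) (\<Sum>g\<in>G0. s (\<kappa> m g) g) = s (sec x m) m" using \<kappa> by metis
    qed
    also have "\<dots> = x" using sec x unfolding supp_def by blast
    finally show ?thesis .
  qed
  have "FPc M (card G0)" unfolding FPc_def
    using sub G0 lc rep by (intro conjI exI[of _ G0] exI[of _ id] exI[of _ c]) auto
  then show ?thesis by blast
qed


section \<open>Complexes\<close>

lemma cc_sub: "chain_complex s X d \<Longrightarrow> subspace (X n)"
  unfolding chain_complex_def by blast
lemma cc_map: "chain_complex s X d \<Longrightarrow> x \<in> X (Suc n) \<Longrightarrow> d n x \<in> X n"
  unfolding chain_complex_def by blast
lemma cc_add: "chain_complex s X d \<Longrightarrow> x \<in> X (Suc n) \<Longrightarrow> y \<in> X (Suc n) \<Longrightarrow> d n (x + y) = d n x + d n y"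
  unfolding chain_complex_def linear_on_def by blast
lemma cc_scale: "chain_complex s X d \<Longrightarrow> x \<in> X (Suc n) \<Longrightarrow> d n (s c x) = s c (d n x)"
  unfolding chain_complex_def linear_on_def by blast
lemma cc_dd: "chain_complex s X d \<Longrightarrow> x \<in> X (Suc (Suc n)) \<Longrightarrow> d n (d (Suc n) x) = 0"
  unfolding chain_complex_def by blast
lemma cc_zero: "chain_complex s X d \<Longrightarrow> d n 0 = 0"
  using cc_scale[of X d 0 n 0] cc_sub[of X d "Suc n"] subspace_0 by simp
lemma cc_neg: "chain_complex s X d \<Longrightarrow> x \<in> X (Suc n) \<Longrightarrow> d n (- x) = - d n x"
  using cc_scale[of X d x n "-1"] by simp
lemma cc_diff: "chain_complex s X d \<Longrightarrow> x \<in> X (Suc n) \<Longrightarrow> y \<in> X (Suc n) \<Longrightarrow> d n (x - y) = d n x - d n y"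
  using cc_add[of X d x n "-y"] cc_neg[of X d y n] cc_sub[of X d "Suc n"] subspace_neg by simp

lemma sub_cc:
  assumes "chain_complex s X d" "subcomplex s Y X d"
  shows "chain_complex s Y d"
proof -
  have "Y n \<subseteq> X n" for n using assms(2) unfolding subcomplex_def by blast
  then show ?thesis using assms unfolding chain_complex_def subcomplex_def linear_on_def
    by (metis image_subset_iff subsetD)
qed

definition psum :: "(nat \<Rightarrow> 'm set) \<Rightarrow> (nat \<Rightarrow> 'm set) \<Rightarrow> nat \<Rightarrow> 'm set" where
  "psum A B n = {a + b | a b. a \<in> A n \<and> b \<in> B n}"

lemma subcomplexD:
  assumes "subcomplex s A X d"
  shows "subspace (A n)" "A n \<subseteq> X n" "a \<in> A (Suc n) \<Longrightarrow> d n a \<in> A n"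
  using assms unfolding subcomplex_def by (auto simp: image_subset_iff)

lemma cds_comm:
  assumes "complex_direct_sum s X d A B" shows "complex_direct_sum s X d B A"
proof -
  have "{p + q |p q. p \<in> B n \<and> q \<in> A n} = {p + q |p q. p \<in> A n \<and> q \<in> B n}" for n
    by (auto simp: add.commute) (metis add.commute)+
  then show ?thesis using assms unfolding complex_direct_sum_def by auto
qed

lemma psum_sub:
  assumes "chain_complex s X d" "subcomplex s A X d" "subcomplex s B X d"
  shows "subcomplex s (psum A B) X d"
  unfolding subcomplex_def
proof (intro allI conjI)
  fix n
  note A = subcomplexD[OF assms(2)] and B = subcomplexD[OF assms(3)]
  show "subspace (psum A B n)" unfolding subspace_def psum_def
  proof (intro conjI ballI allI)
    show "0 \<in> {a + b |a b. a \<in> A n \<and> b \<in> B n}" using subspace_0[OF A(1)] subspace_0[OF B(1)] by force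
  next
    fix u v assume "u \<in> {a + b |a b. a \<in> A n \<and> b \<in> B n}" "v \<in> {a + b |a b. a \<in> A n \<and> b \<in> B n}"
    then obtain a b a' b' where "u = a + b" "v = a' + b'" "a \<in> A n" "b \<in> B n" "a' \<in> A n" "b' \<in> B n" by auto
    then show "u + v \<in> {a + b |a b. a \<in> A n \<and> b \<in> B n}"
      using subspace_add[OF A(1)] subspace_add[OF B(1)]
      by (intro CollectI exI[of _ "a+a'"] exI[of _ "b+b'"]) (auto simp: algebra_simps)
  next
    fix c u assume "u \<in> {a + b |a b. a \<in> A n \<and> b \<in> B n}"
    then obtain a b where "u = a + b" "a \<in> A n" "b \<in> B n" by auto
    then show "s c u \<in> {a + b |a b. a \<in> A n \<and> b \<in> B n}"
      using subspace_scale[OF A(1)] subspace_scale[OF B(1)]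
      by (intro CollectI exI[of _ "s c a"] exI[of _ "s c b"]) (auto simp: algebra_simps)
  qed
  show "psum A B n \<subseteq> X n" unfolding psum_def using A(2) B(2) subspace_add[OF cc_sub[OF assms(1)]] by blast
  show "d n ` psum A B (Suc n) \<subseteq> psum A B n"
  proof
    fix w assume "w \<in> d n ` psum A B (Suc n)"
    then obtain a b where "w = d n (a + b)" "a \<in> A (Suc n)" "b \<in> B (Suc n)" unfolding psum_def by auto
    moreover have "a \<in> X (Suc n)" "b \<in> X (Suc n)" using calculation A(2) B(2) by auto
    ultimately show "w \<in> psum A B n" unfolding psum_def using cc_add[OF assms(1)] A(3) B(3) by blast
  qed
qed

lemma cds_assoc:
  assumes cc: "chain_complex s X d" and XA: "complex_direct_sum s X d A Y"
    and YB: "complex_direct_sum s Y d B C"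
  shows "complex_direct_sum s X d (psum A B) C"
proof -
  have sA: "subcomplex s A X d" and sY: "subcomplex s Y X d" using XA unfolding complex_direct_sum_def by auto
  have sB: "subcomplex s B Y d" and sC: "subcomplex s C Y d" using YB unfolding complex_direct_sum_def by auto
  have YX: "Y n \<subseteq> X n" for n using subcomplexD(2)[OF sY] .
  have BY: "B n \<subseteq> Y n" and CY: "C n \<subseteq> Y n" for n using subcomplexD(2)[OF sB] subcomplexD(2)[OF sC] by auto
  have sB': "subcomplex s B X d" using sB YX unfolding subcomplex_def by blast
  have sC': "subcomplex s C X d" using sC YX unfolding subcomplex_def by blast
  have AY0: "A n \<inter> Y n = {0}" and AYX: "{p + q |p q. p \<in> A n \<and> q \<in> Y n} = X n" for n
    using XA unfolding complex_direct_sum_def by auto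
  have BC0: "B n \<inter> C n = {0}" and BCY: "{p + q |p q. p \<in> B n \<and> q \<in> C n} = Y n" for n
    using YB unfolding complex_direct_sum_def by auto
  have "psum A B n \<inter> C n = {0}" for n
  proof -
    have "u = 0" if u1: "u \<in> psum A B n" "u \<in> C n" for u
    proof -
      obtain a b where ab: "u = a + b" "a \<in> A n" "b \<in> B n" using u1 unfolding psum_def by auto
      have "a = u - b" using ab by simp
      moreover have "u - b \<in> Y n" using u1(2) ab(3) CY BY subspace_diff[OF subcomplexD(1)[OF sY]] by blast
      ultimately have "a \<in> A n \<inter> Y n" using ab(2) by simp
      then have "a = 0" using AY0 by blast
      then have "b \<in> C n" using ab u1 by simp
      then have "b = 0" using ab(3) BC0 by auto
      then show "u = 0" using ab \<open>a = 0\<close> by simp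
    qed
    moreover have "0 \<in> psum A B n \<inter> C n" using subspace_0 subcomplexD(1)[OF psum_sub[OF cc sA sB']] subcomplexD(1)[OF sC] by auto
    ultimately show ?thesis by blast
  qed
  moreover have "{p + q |p q. p \<in> psum A B n \<and> q \<in> C n} = X n" for n
  proof
    show "{p + q |p q. p \<in> psum A B n \<and> q \<in> C n} \<subseteq> X n"
      using subcomplexD(2)[OF psum_sub[OF cc sA sB']] subcomplexD(2)[OF sC'] subspace_add[OF cc_sub[OF cc]] by blast
    show "X n \<subseteq> {p + q |p q. p \<in> psum A B n \<and> q \<in> C n}"
    proof
      fix z assume "z \<in> X n"
      then obtain a y where "z = a + y" "a \<in> A n" "y \<in> Y n" using AYX by blast
      moreover obtain b c where "y = b + c" "b \<in> B n" "c \<in> C n" using BCY calculation(3) by blast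
      ultimately show "z \<in> {p + q |p q. p \<in> psum A B n \<and> q \<in> C n}" unfolding psum_def
        by (intro CollectI exI[of _ "a+b"] exI[of _ c]) (auto simp: add.assoc)
    qed
  qed
  ultimately show ?thesis unfolding complex_direct_sum_def using psum_sub[OF cc sA sB'] sC' by blast
qed

lemma acyc_sum:
  assumes cc: "chain_complex s X d" and XA: "complex_direct_sum s X d A Y"
    and sB: "subcomplex s B Y d" and aA: "chain_acyclic A d" and aB: "chain_acyclic B d"
  shows "chain_acyclic (psum A B) d"
  unfolding chain_acyclic_def
proof
  fix n
  have sA: "subcomplex s A X d" and sY: "subcomplex s Y X d" using XA unfolding complex_direct_sum_def by auto
  have AY0: "A k \<inter> Y k = {0}" for k using XA unfolding complex_direct_sum_def by auto
  have BY: "B k \<subseteq> Y k" for k using subcomplexD(2)[OF sB] .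
  have AX: "A k \<subseteq> X k" for k using subcomplexD(2)[OF sA] .
  have YX: "Y k \<subseteq> X k" for k using subcomplexD(2)[OF sY] .
  show "cycles (psum A B) d n \<subseteq> d n ` psum A B (Suc n)"
  proof
    fix z assume z: "z \<in> cycles (psum A B) d n"
    then have "z \<in> psum A B n" unfolding cycles_def by (auto split: if_splits)
    then obtain a b where ab: "z = a + b" "a \<in> A n" "b \<in> B n" unfolding psum_def by auto
    have "a \<in> cycles A d n \<and> b \<in> cycles B d n"
    proof (cases "n = 0")
      case True then show ?thesis using ab unfolding cycles_def by simp
    next
      case False
      then obtain k where k: "n = Suc k" by (cases n) auto
      have "d k z = 0" using z k unfolding cycles_def by simp
      moreover have "d k z = d k a + d k b" using ab k cc_add[OF cc] AX BY YX by blast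
      ultimately have "d k a = - d k b" by (simp add: eq_neg_iff_add_eq_0)
      moreover have "d k a \<in> A k" using subcomplexD(3)[OF sA] ab k by simp
      moreover have "d k b \<in> Y k" using subcomplexD(3)[OF sB] ab k BY by blast
      ultimately have "d k a \<in> Y k" using subspace_neg[OF subcomplexD(1)[OF sY]] by metis
      then have "d k a = 0" using AY0 \<open>d k a \<in> A k\<close> by blast
      moreover then have "d k b = 0" using \<open>d k a = - d k b\<close> by simp
      ultimately show ?thesis using ab k unfolding cycles_def by simp
    qed
    then obtain a' b' where "a' \<in> A (Suc n)" "a = d n a'" "b' \<in> B (Suc n)" "b = d n b'"
      using aA aB unfolding chain_acyclic_def by blast
    moreover then have "d n (a' + b') = a + b" using cc_add[OF cc] AX BY YX by blast
    moreover have "a' + b' \<in> psum A B (Suc n)" unfolding psum_def using calculation by blast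
    ultimately show "z \<in> d n ` psum A B (Suc n)" using ab by (metis image_eqI)
  qed
qed


section \<open>Strands\<close>

definition strand :: "(nat \<Rightarrow> 'm set) \<Rightarrow> (nat \<Rightarrow> 'm \<Rightarrow> 'm) \<Rightarrow> nat \<Rightarrow> nat \<Rightarrow> (nat \<Rightarrow> 'm) \<Rightarrow> (nat \<Rightarrow> 'm \<Rightarrow> 'a) \<Rightarrow> bool" where
  "strand X d i j x \<phi> \<longleftrightarrow>
    (\<forall>l\<le>j. x l \<in> X (i+l) \<and> lfun (X (i+l)) (\<phi> l) \<and> \<phi> l (x l) = 1) \<and>
    (\<forall>l<j. \<forall>z\<in>X (Suc (i+l)). \<phi> (Suc l) z = 0 \<longrightarrow> \<phi> l (d (i+l) z) = 0) \<and>
    (\<forall>u\<in>X (Suc (i+j)). \<phi> j (d (i+j) u) = 0) \<and>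
    (\<forall>l<j. \<exists>c. d (i+l) (x (Suc l)) = s c (x l)) \<and>
    (0 < i \<longrightarrow> d (i-1) (x 0) = 0)"

definition Amod :: "nat \<Rightarrow> nat \<Rightarrow> (nat \<Rightarrow> 'm) \<Rightarrow> nat \<Rightarrow> 'm set" where
  "Amod i j x n = (if i \<le> n \<and> n \<le> i + j then {s c (x (n-i)) | c. True} else {0})"

definition Ymod :: "(nat \<Rightarrow> 'm set) \<Rightarrow> nat \<Rightarrow> nat \<Rightarrow> (nat \<Rightarrow> 'm \<Rightarrow> 'a) \<Rightarrow> nat \<Rightarrow> 'm set" where
  "Ymod X i j \<phi> n = (if i \<le> n \<and> n \<le> i + j then {z \<in> X n. \<phi> (n-i) z = 0} else X n)"

lemma Amod_out: "\<not> (i \<le> n \<and> n \<le> i + j) \<Longrightarrow> Amod i j x n = {0}"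
  unfolding Amod_def by (simp only: if_not_P if_False)
lemma Ymod_out: "\<not> (i \<le> n \<and> n \<le> i + j) \<Longrightarrow> Ymod X i j \<phi> n = X n"
  unfolding Ymod_def by (simp only: if_not_P if_False)
lemma Amod_in: "i \<le> n \<Longrightarrow> n \<le> i + j \<Longrightarrow> Amod i j x n = {s c (x (n-i)) | c. True}"
  unfolding Amod_def by simp
lemma Ymod_in: "i \<le> n \<Longrightarrow> n \<le> i + j \<Longrightarrow> Ymod X i j \<phi> n = {z \<in> X n. \<phi> (n-i) z = 0}"
  unfolding Ymod_def by simp

lemma strandD:
  assumes "strand X d i j x \<phi>"
  shows "l \<le> j \<Longrightarrow> x l \<in> X (i+l)" "l \<le> j \<Longrightarrow> lfun (X (i+l)) (\<phi> l)" "l \<le> j \<Longrightarrow> \<phi> l (x l) = 1"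
    "l < j \<Longrightarrow> z \<in> X (Suc (i+l)) \<Longrightarrow> \<phi> (Suc l) z = 0 \<Longrightarrow> \<phi> l (d (i+l) z) = 0"
    "u \<in> X (Suc (i+j)) \<Longrightarrow> \<phi> j (d (i+j) u) = 0"
    "l < j \<Longrightarrow> \<exists>c. d (i+l) (x (Suc l)) = s c (x l)"
    "0 < i \<Longrightarrow> d (i-1) (x 0) = 0"
  using assms unfolding strand_def by auto

lemma strand_split:
  assumes cc: "chain_complex s X d" and st: "strand X d i j x \<phi>"
  shows "complex_direct_sum s X d (Amod i j x) (Ymod X i j \<phi>)"
proof -
  note S = strandD[OF st]
  have xX: "x (n - i) \<in> X n" if "i \<le> n" "n \<le> i + j" for n using S(1)[of "n-i"] that by simp
  have lf: "lfun (X n) (\<phi> (n - i))" if "i \<le> n" "n \<le> i + j" for n using S(2)[of "n-i"] that by simp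
  have one: "\<phi> (n - i) (x (n - i)) = 1" if "i \<le> n" "n \<le> i + j" for n using S(3)[of "n-i"] that by simp
  have sA: "subcomplex s (Amod i j x) X d" unfolding subcomplex_def
  proof (intro allI conjI)
    fix n
    show "subspace (Amod i j x n)"
    proof (cases "i \<le> n \<and> n \<le> i + j")
      case True
      then have "Amod i j x n = range (\<lambda>c. s c (x (n-i)))" unfolding Amod_def by auto
      then show ?thesis using span_singleton subspace_span by metis
    next
      case False then show ?thesis unfolding Amod_def if_not_P[OF False] by simp
    qed
    show "Amod i j x n \<subseteq> X n" unfolding Amod_def using xX subspace_scale[OF cc_sub[OF cc]] subspace_0[OF cc_sub[OF cc]]
      by auto
    show "d n ` Amod i j x (Suc n) \<subseteq> Amod i j x n"
    proof
      fix w assume "w \<in> d n ` Amod i j x (Suc n)"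
      then obtain a where a: "w = d n a" "a \<in> Amod i j x (Suc n)" by auto
      show "w \<in> Amod i j x n"
      proof (cases "i \<le> Suc n \<and> Suc n \<le> i + j")
        case False
        then have "a = 0" using a Amod_out[OF False] by simp
        then show ?thesis using a cc_zero[OF cc] subspace_0[OF \<open>subspace (Amod i j x n)\<close>] by auto
      next
        case True
        then obtain c where c: "a = s c (x (Suc n - i))" using a unfolding Amod_def by auto
        show ?thesis
        proof (cases "i \<le> n")
          case True
          define l where "l = n - i"
          have l: "l < j" "Suc n - i = Suc l" "n = i + l" using True \<open>i \<le> Suc n \<and> Suc n \<le> i + j\<close> unfolding l_def by auto
          obtain c' where c': "d (i+l) (x (Suc l)) = s c' (x l)" using S(6)[OF l(1)] by blast
          have "x (Suc l) \<in> X (Suc n)" using S(1)[of "Suc l"] l by simp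
          then have "w = s (c * c') (x l)" using a c c' l cc_scale[OF cc] by simp
          then show ?thesis unfolding Amod_def using l by auto
        next
          case False
          then have "Suc n = i" using True by simp
          then have "d n (x 0) = 0" using S(7) by (metis diff_Suc_1 zero_less_Suc)
          moreover have "x 0 \<in> X (Suc n)" using S(1)[of 0] \<open>Suc n = i\<close> by simp
          ultimately have "w = 0" using a c \<open>Suc n = i\<close> cc_scale[OF cc] by simp
          then show ?thesis using subspace_0[OF \<open>subspace (Amod i j x n)\<close>] by simp
        qed
      qed
    qed
  qed
  have sY: "subcomplex s (Ymod X i j \<phi>) X d" unfolding subcomplex_def
  proof (intro allI conjI)
    fix n
    show "subspace (Ymod X i j \<phi> n)"
    proof (cases "i \<le> n \<and> n \<le> i + j")
      case True
      note L = lf[OF True[THEN conjunct1] True[THEN conjunct2]]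
      show ?thesis using True unfolding Ymod_def subspace_def
        using cc_sub[OF cc, of n] lfun_zero[OF cc_sub[OF cc] L] lfun_add[OF L] lfun_scale[OF L]
        by (auto simp: subspace_0 subspace_add subspace_scale)
    next
      case False then show ?thesis using Ymod_out[OF False] cc_sub[OF cc] by simp
    qed
    show "Ymod X i j \<phi> n \<subseteq> X n" unfolding Ymod_def by auto
    show "d n ` Ymod X i j \<phi> (Suc n) \<subseteq> Ymod X i j \<phi> n"
    proof
      fix w assume "w \<in> d n ` Ymod X i j \<phi> (Suc n)"
      then obtain z where z: "w = d n z" "z \<in> Ymod X i j \<phi> (Suc n)" by auto
      have zX: "z \<in> X (Suc n)" using z unfolding Ymod_def by (auto split: if_splits)
      have wX: "w \<in> X n" using z zX cc_map[OF cc] by simp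
      show "w \<in> Ymod X i j \<phi> n"
      proof (cases "i \<le> n \<and> n \<le> i + j")
        case False then show ?thesis using wX Ymod_out[OF False] by simp
      next
        case True
        define l where "l = n - i"
        have nl: "n = i + l" using True unfolding l_def by simp
        show ?thesis
        proof (cases "n = i + j")
          case True
          then have "\<phi> j (d (i+j) z) = 0" using S(5) zX by simp
          then show ?thesis using wX z True unfolding Ymod_def by simp
        next
          case False
          then have l: "l < j" using True nl by simp
          have "\<phi> (Suc l) z = 0" using z l nl unfolding Ymod_def by (simp add: Suc_diff_le)
          then have "\<phi> l (d (i+l) z) = 0" using S(4)[OF l] zX nl by simp
          then show ?thesis using wX z True nl unfolding Ymod_def by simp
        qed
      qed
    qed
  qed
  have "Amod i j x n \<inter> Ymod X i j \<phi> n = {0} \<and> {p + q |p q. p \<in> Amod i j x n \<and> q \<in> Ymod X i j \<phi> n} = X n" for n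
  proof (cases "i \<le> n \<and> n \<le> i + j")
    case False then show ?thesis using Amod_out[OF False] Ymod_out[OF False] subspace_0[OF cc_sub[OF cc]] by auto
  next
    case True
    note L = lf[OF True[THEN conjunct1] True[THEN conjunct2]]
    note o = one[OF True[THEN conjunct1] True[THEN conjunct2]]
    note xn = xX[OF True[THEN conjunct1] True[THEN conjunct2]]
    have 1: "Amod i j x n \<inter> Ymod X i j \<phi> n = {0}"
    proof
      show "Amod i j x n \<inter> Ymod X i j \<phi> n \<subseteq> {0}"
      proof
        fix w assume "w \<in> Amod i j x n \<inter> Ymod X i j \<phi> n"
        then obtain c where "w = s c (x (n-i))" "\<phi> (n-i) w = 0" using True unfolding Amod_def Ymod_def by auto
        then have "c = 0" using lfun_scale[OF L xn] o by simp
        then show "w \<in> {0}" using \<open>w = s c (x (n-i))\<close> by simp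
      qed
      show "{0} \<subseteq> Amod i j x n \<inter> Ymod X i j \<phi> n" using True lfun_zero[OF cc_sub[OF cc] L] subspace_0[OF cc_sub[OF cc]]
        unfolding Amod_def Ymod_def by (auto intro: exI[of _ 0])
    qed
    have 2: "{p + q |p q. p \<in> Amod i j x n \<and> q \<in> Ymod X i j \<phi> n} = X n"
    proof
      show "{p + q |p q. p \<in> Amod i j x n \<and> q \<in> Ymod X i j \<phi> n} \<subseteq> X n"
        using True xn subspace_add[OF cc_sub[OF cc]] subspace_scale[OF cc_sub[OF cc]] unfolding Amod_def Ymod_def by auto
      show "X n \<subseteq> {p + q |p q. p \<in> Amod i j x n \<and> q \<in> Ymod X i j \<phi> n}"
      proof
        fix z assume z: "z \<in> X n"
        define a where "a = s (\<phi> (n-i) z) (x (n-i))"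
        have aX: "a \<in> X n" unfolding a_def using subspace_scale[OF cc_sub[OF cc] xn] .
        have "\<phi> (n-i) (z - a) = 0" using lfun_diff[OF cc_sub[OF cc] L z aX] lfun_scale[OF L xn] o unfolding a_def by simp
        moreover have "z - a \<in> X n" using subspace_diff[OF cc_sub[OF cc] z aX] .
        ultimately have "z - a \<in> Ymod X i j \<phi> n" using True unfolding Ymod_def by simp
        moreover have "a \<in> Amod i j x n" using True unfolding Amod_def a_def by auto
        ultimately show "z \<in> {p + q |p q. p \<in> Amod i j x n \<and> q \<in> Ymod X i j \<phi> n}"
          by (intro CollectI exI[of _ a] exI[of _ "z - a"]) simp
      qed
    qed
    show ?thesis using 1 2 by simp
  qed
  then show ?thesis unfolding complex_direct_sum_def using sA sY by blast
qed


lemma strand_FP: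
  assumes cc: "chain_complex s X d" and st: "strand X d i j x \<phi>" and fp: "FPc (X n) (g n)"
  shows "FPc (Ymod X i j \<phi> n) (if i \<le> n \<and> n \<le> i + j then g n - 1 else g n) \<and> (i \<le> n \<and> n \<le> i + j \<longrightarrow> g n \<ge> 1)"
proof (cases "i \<le> n \<and> n \<le> i + j")
  case True
  note S = strandD[OF st]
  have "x (n - i) \<in> X n" "lfun (X n) (\<phi> (n - i))" "\<phi> (n - i) (x (n - i)) = 1"
    using S(1)[of "n-i"] S(2)[of "n-i"] S(3)[of "n-i"] True by auto
  from split_FP[OF fp this(2,1,3)] show ?thesis using True Ymod_in[of i n j X \<phi>] by simp
next
  case False then show ?thesis unfolding Ymod_out[OF False] if_not_P[OF False] using fp False by blast
qed

lemma strand_x0: "strand X d i j x \<phi> \<Longrightarrow> chain_complex s X d \<Longrightarrow> x 0 \<in> X i \<and> x 0 \<noteq> 0"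
  using strandD(1,2,3)[of X d i j x \<phi> 0] lfun_zero[OF cc_sub] by fastforce

lemma strand_acyc:
  assumes cc: "chain_complex s X d" and st: "strand X d i 1 x \<phi>" and dx: "d i (x 1) = x 0"
  shows "chain_acyclic (Amod i 1 x) d"
  unfolding chain_acyclic_def
proof
  fix n
  note S = strandD[OF st]
  have x0: "x 0 \<in> X i" and x1: "x 1 \<in> X (Suc i)" using S(1)[of 0] S(1)[of 1] by auto
  have o: "\<phi> 0 (x 0) = 1" using S(3)[of 0] by simp
  have L: "lfun (X i) (\<phi> 0)" using S(2)[of 0] by simp
  show "cycles (Amod i 1 x) d n \<subseteq> d n ` Amod i 1 x (Suc n)"
  proof
    fix z assume z: "z \<in> cycles (Amod i 1 x) d n"
    then have zA: "z \<in> Amod i 1 x n" unfolding cycles_def by (auto split: if_splits)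
    have zero_ok: "0 \<in> d n ` Amod i 1 x (Suc n)"
    proof -
      have "0 \<in> Amod i 1 x (Suc n)" unfolding Amod_def by (auto intro: exI[of _ 0])
      then show ?thesis using cc_zero[OF cc, of n] by (metis image_eqI)
    qed
    show "z \<in> d n ` Amod i 1 x (Suc n)"
    proof (cases "n = i")
      case True
      then obtain c where c: "z = s c (x 0)" using zA Amod_in[of i n 1 x] by auto
      have "s c (x 1) \<in> Amod i 1 x (Suc n)" using True Amod_in[of i "Suc n" 1 x] by auto
      moreover have "d n (s c (x 1)) = z" using True c cc_scale[OF cc x1] dx by simp
      ultimately show ?thesis by (metis image_eqI)
    next
      case False
      show ?thesis
      proof (cases "n = Suc i")
        case True
        then obtain c where c: "z = s c (x 1)" using zA Amod_in[of i n 1 x] by auto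
        have "d i z = 0" using z True unfolding cycles_def by simp
        then have "s c (x 0) = 0" using c cc_scale[OF cc x1] dx by simp
        then have "c = 0" using lfun_scale[OF L x0, of c] o lfun_zero[OF cc_sub[OF cc] L] by simp
        then show ?thesis using c zero_ok by simp
      next
        case False
        then have "z = 0" using zA Amod_out[of i n 1 x] \<open>n \<noteq> i\<close> by auto
        then show ?thesis using zero_ok by simp
      qed
    qed
  qed
qed


lemma sumE_N: assumes "f \<in> sumE_mod N ii jj n" shows "f N = 0"
proof (rule ccontr)
  assume "f N \<noteq> 0"
  then have "N < N" using assms unfolding sumE_mod_def by blast
  then show False by simp
qed

lemma E_iso:
  assumes cc: "chain_complex s X d" and st: "strand X d i j x \<phi>"
    and Ed: "\<forall>l<j. d (i+l) (x (Suc l)) = s ((-1)^i * r) (x l)"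
    and YPQ: "complex_direct_sum s (Ymod X i j \<phi>) d P' Q'"
    and iso: "chain_iso s Q' d fscale (sumE_mod N' ii jj) (sumE_diff r ii)"
  shows "chain_iso s (psum (Amod i j x) Q') d fscale (sumE_mod (Suc N') (ii(N':=i)) (jj(N':=j))) (sumE_diff r (ii(N':=i)))"
proof -
  note S = strandD[OF st]
  have "\<exists>\<psi>. (\<forall>n. bij_betw (\<psi> n) (Q' n) (sumE_mod N' ii jj n) \<and> linear_on s fscale (Q' n) (\<psi> n)) \<and>
     (\<forall>n. \<forall>x\<in>Q' (Suc n). \<psi> n (d n x) = sumE_diff r ii n (\<psi> (Suc n) x))"
    using iso unfolding chain_iso_def .
  then obtain \<psi> where H: "(\<forall>n. bij_betw (\<psi> n) (Q' n) (sumE_mod N' ii jj n) \<and> linear_on s fscale (Q' n) (\<psi> n)) \<and>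
     (\<forall>n. \<forall>x\<in>Q' (Suc n). \<psi> n (d n x) = sumE_diff r ii n (\<psi> (Suc n) x))" by (rule exE)
  have bij: "\<And>n. bij_betw (\<psi> n) (Q' n) (sumE_mod N' ii jj n)"
    and lin: "\<And>n. linear_on s fscale (Q' n) (\<psi> n)"
    and com: "\<And>n q. q \<in> Q' (Suc n) \<Longrightarrow> \<psi> n (d n q) = sumE_diff r ii n (\<psi> (Suc n) q)"
    using H by auto
  have XAY: "complex_direct_sum s X d (Amod i j x) (Ymod X i j \<phi>)" using strand_split[OF cc st] .
  have sA: "subcomplex s (Amod i j x) X d" and sY: "subcomplex s (Ymod X i j \<phi>) X d"
    using XAY unfolding complex_direct_sum_def by auto
  have sQ: "subcomplex s Q' (Ymod X i j \<phi>) d" using YPQ unfolding complex_direct_sum_def by auto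
  have QY: "Q' n \<subseteq> Ymod X i j \<phi> n" for n using subcomplexD(2)[OF sQ] .
  have YX: "Ymod X i j \<phi> n \<subseteq> X n" for n using subcomplexD(2)[OF sY] .
  have sQX: "subcomplex s Q' X d" using sQ YX unfolding subcomplex_def by blast
  have sPQ: "subcomplex s (psum (Amod i j x) Q') X d" using psum_sub[OF cc sA sQX] .
  define inR where "inR n \<longleftrightarrow> i \<le> n \<and> n \<le> i + j" for n
  define cf where "cf n z = (if inR n then \<phi> (n-i) z else 0)" for n z
  define xv where "xv n = (if inR n then x (n-i) else 0)" for n
  define pr where "pr n z = z - s (cf n z) (xv n)" for n z
  define \<Psi> where "\<Psi> n z = (\<psi> n (pr n z))(N' := cf n z)" for n z
  have xvX: "xv n \<in> X n" for n
  proof (cases "inR n")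
    case True then have "x (n-i) \<in> X n" using S(1)[of "n-i"] unfolding inR_def by auto
    then show ?thesis unfolding xv_def using True by simp
  next
    case False then show ?thesis unfolding xv_def using subspace_0[OF cc_sub[OF cc]] by simp
  qed
  have xvA: "s c (xv n) \<in> Amod i j x n" for n c
  proof (cases "inR n")
    case True then show ?thesis unfolding xv_def using Amod_in[of i n j x] unfolding inR_def by auto
  next
    case False then show ?thesis unfolding xv_def using Amod_out[of i n j x] unfolding inR_def by auto
  qed
  have xin: "x (n-i) \<in> X n" "lfun (X n) (\<phi> (n-i))" "\<phi> (n-i) (x (n-i)) = 1" if "inR n" for n
    using S(1)[of "n-i"] S(2)[of "n-i"] S(3)[of "n-i"] that unfolding inR_def by auto
  have cf_lin: "lfun (X n) (cf n)" for n
  proof (cases "inR n")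
    case True
    then have "cf n = \<phi> (n-i)" unfolding cf_def by (simp add: fun_eq_iff)
    then show ?thesis using xin(2)[OF True] by simp
  next
    case False then have "cf n = (\<lambda>_. 0)" unfolding cf_def by (simp add: fun_eq_iff)
    then show ?thesis unfolding lfun_def by simp
  qed
  have cf_x: "cf n (s c (xv n)) = (if inR n then c else 0)" for n c
  proof (cases "inR n")
    case True
    then have "cf n (s c (xv n)) = \<phi> (n-i) (s c (x (n-i)))" unfolding cf_def xv_def by simp
    also have "\<dots> = c" using lfun_scale[OF xin(2)[OF True] xin(1)[OF True]] xin(3)[OF True] by simp
    finally show ?thesis using True by simp
  next
    case False then show ?thesis unfolding cf_def by simp
  qed
  have cf_Y: "cf n q = 0" if "q \<in> Ymod X i j \<phi> n" for n q
    using that Ymod_in[of i n j X \<phi>] unfolding cf_def inR_def by auto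
  have A_form: "\<exists>c. a = s c (xv n)" if "a \<in> Amod i j x n" for a n
  proof (cases "inR n")
    case True then show ?thesis using that Amod_in[of i n j x] unfolding inR_def xv_def by auto
  next
    case False then show ?thesis using that Amod_out[of i n j x] unfolding inR_def xv_def by auto
  qed
  have dec: "cf n (a + q) = cf n a \<and> pr n (a + q) = q \<and> a = s (cf n a) (xv n)"
    if dd: "a \<in> Amod i j x n" "q \<in> Q' n" for a q n
  proof -
    obtain c where c: "a = s c (xv n)" using A_form[OF dd(1)] by blast
    have aX: "a \<in> X n" using dd(1) subcomplexD(2)[OF sA] by blast
    have qX: "q \<in> X n" "q \<in> Ymod X i j \<phi> n" using dd(2) QY YX by blast+
    have 1: "cf n (a + q) = cf n a" using lfun_add[OF cf_lin aX qX(1)] cf_Y[OF qX(2)] by simp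
    have 2: "a = s (cf n a) (xv n)"
      using c cf_x[of n c] by (cases "inR n") (auto simp: xv_def)
    have "pr n (a + q) = q" unfolding pr_def using 1 2 by (simp add: algebra_simps)
    then show ?thesis using 1 2 by simp
  qed
  have decz: "\<exists>a q. z = a + q \<and> a \<in> Amod i j x n \<and> q \<in> Q' n" if "z \<in> psum (Amod i j x) Q' n" for z n
    using that unfolding psum_def by blast
  have prQ: "pr n z \<in> Q' n" if "z \<in> psum (Amod i j x) Q' n" for z n
    using decz[OF that] dec by auto
  have zrec: "z = s (cf n z) (xv n) + pr n z" for z n unfolding pr_def by simp
  have PsiIn: "\<Psi> n z \<in> sumE_mod (Suc N') (ii(N':=i)) (jj(N':=j)) n" if "z \<in> psum (Amod i j x) Q' n" for z n
  proof -
    have "\<psi> n (pr n z) \<in> sumE_mod N' ii jj n" using bij_betwE[OF bij] prQ[OF that] by blast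
    moreover have "cf n z \<noteq> 0 \<Longrightarrow> inR n" unfolding cf_def by (cases "inR n") auto
    ultimately show ?thesis unfolding \<Psi>_def sumE_mod_def inR_def by (auto simp: less_Suc_eq)
  qed
  have bijP: "bij_betw (\<Psi> n) (psum (Amod i j x) Q' n) (sumE_mod (Suc N') (ii(N':=i)) (jj(N':=j)) n)" for n
    unfolding bij_betw_def
  proof (intro conjI)
    show "inj_on (\<Psi> n) (psum (Amod i j x) Q' n)"
    proof (rule inj_onI)
      fix z z' assume z: "z \<in> psum (Amod i j x) Q' n" and z': "z' \<in> psum (Amod i j x) Q' n" and eq: "\<Psi> n z = \<Psi> n z'"
      have c: "cf n z = cf n z'" using fun_cong[OF eq, of N'] unfolding \<Psi>_def by simp
      have m1: "\<psi> n (pr n z) \<in> sumE_mod N' ii jj n" using bij_betwE[OF bij] prQ[OF z] by blast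
      have m2: "\<psi> n (pr n z') \<in> sumE_mod N' ii jj n" using bij_betwE[OF bij] prQ[OF z'] by blast
      have "\<psi> n (pr n z) = \<psi> n (pr n z')"
      proof
        fix k show "\<psi> n (pr n z) k = \<psi> n (pr n z') k"
        proof (cases "k = N'")
          case True then show ?thesis using sumE_N[OF m1] sumE_N[OF m2] by simp
        next
          case False then show ?thesis using fun_cong[OF eq, of k] unfolding \<Psi>_def by simp
        qed
      qed
      then have peq: "pr n z = pr n z'" using inj_onD[OF bij_betw_imp_inj_on[OF bij] _ prQ[OF z] prQ[OF z']] by blast
      have "z = s (cf n z) (xv n) + pr n z" by (rule zrec)
      also have "\<dots> = s (cf n z') (xv n) + pr n z'" using c peq by simp
      also have "\<dots> = z'" by (rule zrec[symmetric])
      finally show "z = z'" .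
    qed
    show "\<Psi> n ` psum (Amod i j x) Q' n = sumE_mod (Suc N') (ii(N':=i)) (jj(N':=j)) n"
    proof
      show "\<Psi> n ` psum (Amod i j x) Q' n \<subseteq> sumE_mod (Suc N') (ii(N':=i)) (jj(N':=j)) n" using PsiIn by blast
      show "sumE_mod (Suc N') (ii(N':=i)) (jj(N':=j)) n \<subseteq> \<Psi> n ` psum (Amod i j x) Q' n"
      proof
        fix f :: "nat \<Rightarrow> 'a" assume f: "f \<in> sumE_mod (Suc N') (ii(N':=i)) (jj(N':=j)) n"
        define f' where "f' = f(N' := 0)"
        have "f' \<in> sumE_mod N' ii jj n"
        proof -
          have "f' k \<noteq> 0 \<Longrightarrow> k < N' \<and> ii k \<le> n \<and> n \<le> ii k + jj k" for k
            using f unfolding f'_def sumE_mod_def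
            by (cases "k = N'") (auto simp: less_Suc_eq)
          then show ?thesis unfolding sumE_mod_def by blast
        qed
        then obtain q where q: "q \<in> Q' n" "\<psi> n q = f'" using bij_betw_imp_surj_on[OF bij] by (metis imageE)
        define c where "c = f N'"
        have cR: "c \<noteq> 0 \<Longrightarrow> inR n" using f unfolding c_def sumE_mod_def inR_def by auto
        define z where "z = s c (xv n) + q"
        have zP: "z \<in> psum (Amod i j x) Q' n" unfolding z_def psum_def using xvA q(1) by blast
        have "cf n (s c (xv n)) = c" using cf_x[of n c] cR by auto
        then have "cf n z = c" "pr n z = q" using dec[OF xvA q(1)] unfolding z_def by auto
        then have "\<Psi> n z = f" unfolding \<Psi>_def using q(2) unfolding f'_def c_def by auto
        then show "f \<in> \<Psi> n ` psum (Amod i j x) Q' n" using zP by blast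
      qed
    qed
  qed
  have linP: "linear_on s fscale (psum (Amod i j x) Q' n) (\<Psi> n)" for n
    unfolding linear_on_def
  proof (intro conjI ballI allI)
    have PX: "psum (Amod i j x) Q' n \<subseteq> X n" using subcomplexD(2)[OF sPQ] .
    have subP: "subspace (psum (Amod i j x) Q' n)" using subcomplexD(1)[OF sPQ] .
    fix z z' assume z: "z \<in> psum (Amod i j x) Q' n" and z': "z' \<in> psum (Amod i j x) Q' n"
    have zz: "z + z' \<in> psum (Amod i j x) Q' n" using subspace_add[OF subP z z'] .
    have c: "cf n (z + z') = cf n z + cf n z'" using lfun_add[OF cf_lin] z z' PX by blast
    have p: "pr n (z + z') = pr n z + pr n z'" unfolding pr_def c by (simp add: algebra_simps)
    have "\<psi> n (pr n (z + z')) = \<psi> n (pr n z) + \<psi> n (pr n z')"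
      unfolding p using lin[of n] prQ[OF z] prQ[OF z'] unfolding linear_on_def by blast
    then show "\<Psi> n (z + z') = \<Psi> n z + \<Psi> n z'" unfolding \<Psi>_def c by (auto simp: fun_eq_iff)
  next
    have PX: "psum (Amod i j x) Q' n \<subseteq> X n" using subcomplexD(2)[OF sPQ] .
    fix a z assume z: "z \<in> psum (Amod i j x) Q' n"
    have c: "cf n (s a z) = a * cf n z" using lfun_scale[OF cf_lin] z PX by blast
    have p: "pr n (s a z) = s a (pr n z)" unfolding pr_def c by (simp add: algebra_simps)
    have "\<psi> n (pr n (s a z)) = fscale a (\<psi> n (pr n z))"
      unfolding p using lin[of n] prQ[OF z] unfolding linear_on_def by blast
    then show "\<Psi> n (s a z) = fscale a (\<Psi> n z)" unfolding \<Psi>_def c by (auto simp: fun_eq_iff fscale_def)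
  qed
  have comP: "\<Psi> n (d n z) = sumE_diff r (ii(N':=i)) n (\<Psi> (Suc n) z)" if z: "z \<in> psum (Amod i j x) Q' (Suc n)" for n z
  proof -
    define c where "c = cf (Suc n) z"
    define q where "q = pr (Suc n) z"
    have qQ: "q \<in> Q' (Suc n)" using prQ[OF z] unfolding q_def .
    have qX: "q \<in> X (Suc n)" using qQ QY YX by blast
    have zq: "z = s c (xv (Suc n)) + q" unfolding c_def q_def using zrec .
    have dz: "d n z = s c (d n (xv (Suc n))) + d n q"
      unfolding zq using cc_add[OF cc subspace_scale[OF cc_sub[OF cc] xvX] qX] cc_scale[OF cc xvX] by simp
    have a'A: "s c (d n (xv (Suc n))) \<in> Amod i j x n"
      using subcomplexD(3)[OF sA xvA[of c "Suc n"]] cc_scale[OF cc xvX] by simp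
    have dqQ: "d n q \<in> Q' n" using subcomplexD(3)[OF sQX qQ] .
    note D = dec[OF a'A dqQ]
    have prd: "pr n (d n z) = d n q" using D dz by simp
    have cfd: "cf n (d n z) = cf n (s c (d n (xv (Suc n))))" using D dz by simp
    have N'comp: "cf n (s c (d n (xv (Suc n)))) = (if i \<le> n then (-1)^i * r * c else 0)"
    proof (cases "inR (Suc n)")
      case True
      show ?thesis
      proof (cases "inR n")
        case True
        define l where "l = n - i"
        have l: "l < j" "n = i + l" "Suc n - i = Suc l" using True \<open>inR (Suc n)\<close> unfolding l_def inR_def by auto
        have "d n (xv (Suc n)) = s ((-1)^i * r) (x l)" using Ed l \<open>inR (Suc n)\<close> unfolding xv_def by simp
        then have "cf n (s c (d n (xv (Suc n)))) = cf n (s (c * ((-1)^i * r)) (xv n))"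
          using True unfolding xv_def l_def by simp
        also have "\<dots> = c * ((-1)^i * r)" using cf_x True by simp
        finally show ?thesis using True unfolding inR_def by (simp add: mult_ac)
      next
        case False
        then have "Suc n = i" using True unfolding inR_def by auto
        then have "d n (xv (Suc n)) = 0" using S(7) True unfolding xv_def by (metis diff_Suc_1 diff_self_eq_0 zero_less_Suc)
        then show ?thesis using False \<open>Suc n = i\<close> unfolding cf_def by simp
      qed
    next
      case False
      then have "xv (Suc n) = 0" unfolding xv_def by simp
      then have "cf n (s c (d n (xv (Suc n)))) = 0"
        using cc_zero[OF cc] lfun_zero[OF cc_sub[OF cc] cf_lin] by simp
      moreover have "c = 0" unfolding c_def cf_def using False by simp
      ultimately show ?thesis by simp
    qed
    show ?thesis
    proof
      fix k
      show "\<Psi> n (d n z) k = sumE_diff r (ii(N':=i)) n (\<Psi> (Suc n) z) k"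
      proof (cases "k = N'")
        case True
        then show ?thesis unfolding \<Psi>_def sumE_diff_def using cfd N'comp c_def by simp
      next
        case False
        have "\<Psi> n (d n z) k = \<psi> n (d n q) k" unfolding \<Psi>_def using False prd by simp
        also have "\<dots> = sumE_diff r ii n (\<psi> (Suc n) q) k" using com[OF qQ] by simp
        also have "\<dots> = sumE_diff r (ii(N':=i)) n (\<Psi> (Suc n) z) k"
          unfolding sumE_diff_def \<Psi>_def q_def using False by simp
        finally show ?thesis .
      qed
    qed
  qed
  show ?thesis unfolding chain_iso_def using bijP linP comP by blast
qed


section \<open>Finding strands\<close>

lemma unit_strand:
  assumes cc: "chain_complex s X d" and fp: "FPc (X n0) k" and y: "y \<in> X (Suc n0)"
    and nr: "\<forall>z\<in>X n0. d n0 y \<noteq> s r z"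
  shows "\<exists>x \<phi>. strand X d n0 1 x \<phi> \<and> d n0 (x 1) = x 0"
proof -
  have dy: "d n0 y \<in> X n0" using cc_map[OF cc y] .
  obtain \<pi> where \<pi>: "lfun (X n0) \<pi>" "\<pi> (d n0 y) = 1" using split_fun[OF fp dy nr] by blast
  define x where "x l = (if l = 0 then d n0 y else y)" for l :: nat
  define \<phi> where "\<phi> l = (if l = 0 then \<pi> else (\<lambda>z. \<pi> (d n0 z)))" for l :: nat
  have lf1: "lfun (X (Suc n0)) (\<lambda>z. \<pi> (d n0 z))" unfolding lfun_def
    using cc_map[OF cc] cc_add[OF cc] cc_scale[OF cc] lfun_add[OF \<pi>(1)] lfun_scale[OF \<pi>(1)] subspace_add[OF cc_sub[OF cc]]
    by simp
  have "strand X d n0 1 x \<phi>" unfolding strand_def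
  proof (intro conjI allI impI ballI)
    fix l :: nat assume "l \<le> 1"
    then have "l = 0 \<or> l = 1" by auto
    then show "x l \<in> X (n0 + l)" "lfun (X (n0 + l)) (\<phi> l)" "\<phi> l (x l) = 1"
      using dy y \<pi> lf1 unfolding x_def \<phi>_def by auto
  next
    fix l z assume "l < (1::nat)" "z \<in> X (Suc (n0 + l))" "\<phi> (Suc l) z = 0"
    then show "\<phi> l (d (n0 + l) z) = 0" unfolding \<phi>_def by simp
  next
    fix u assume "u \<in> X (Suc (n0 + 1))"
    then have "d n0 (d (Suc n0) u) = 0" using cc_dd[OF cc] by simp
    then show "\<phi> 1 (d (n0 + 1) u) = 0" unfolding \<phi>_def using lfun_zero[OF cc_sub[OF cc] \<pi>(1)] by simp
  next
    fix l :: nat assume "l < 1"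
    then show "\<exists>c. d (n0 + l) (x (Suc l)) = s c (x l)" unfolding x_def by (intro exI[of _ 1]) simp
  next
    assume "0 < n0"
    then obtain m where "n0 = Suc m" by (cases n0) auto
    then show "d (n0 - 1) (x 0) = 0" unfolding x_def using cc_dd[OF cc] y by simp
  qed
  moreover have "d n0 (x 1) = x 0" unfolding x_def by simp
  ultimately show ?thesis by blast
qed

definition chainx :: "(nat \<Rightarrow> 'm set) \<Rightarrow> (nat \<Rightarrow> 'm \<Rightarrow> 'm) \<Rightarrow> nat \<Rightarrow> 'a \<Rightarrow> nat \<Rightarrow> (nat \<Rightarrow> 'm) \<Rightarrow> bool" where
  "chainx X d i e l x \<longleftrightarrow> (\<forall>k\<le>l. x k \<in> X (i+k)) \<and> (\<forall>k<l. d (i+k) (x (Suc k)) = s (e*r) (x k))"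

lemma chain_exists:
  assumes cc: "chain_complex s X d" and mn: "\<forall>n. \<forall>y\<in>X (Suc n). \<exists>z\<in>X n. d n y = s r z"
    and ee: "e * e = 1"
  shows "u \<in> X (i+l) \<Longrightarrow> \<exists>x. chainx X d i e l x \<and> x l = u"
proof (induct l arbitrary: u)
  case 0 then show ?case unfolding chainx_def by (intro exI[of _ "\<lambda>_. u"]) simp
next
  case (Suc l)
  then have u: "u \<in> X (Suc (i + l))" by simp
  obtain z where z: "z \<in> X (i+l)" "d (i+l) u = s r z" using mn u by blast
  define w where "w = s e z"
  have wX: "w \<in> X (i+l)" unfolding w_def using subspace_scale[OF cc_sub[OF cc] z(1)] .
  have "e * r * e = r" using ee by (metis mult.commute mult.left_commute mult_1_right)
  then have du: "d (i+l) u = s (e*r) w" unfolding w_def using z(2) by simp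
  obtain x where x: "chainx X d i e l x" "x l = w" using Suc(1)[OF wX] by blast
  define x' where "x' = x(Suc l := u)"
  have "chainx X d i e (Suc l) x'" unfolding chainx_def
  proof (intro conjI allI impI)
    fix k assume "k \<le> Suc l"
    then show "x' k \<in> X (i + k)" using x(1) Suc(2) unfolding x'_def chainx_def by (cases "k = Suc l") auto
  next
    fix k assume k: "k < Suc l"
    show "d (i + k) (x' (Suc k)) = s (e * r) (x' k)"
    proof (cases "k = l")
      case True then show ?thesis using du x(2) unfolding x'_def by simp
    next
      case False then show ?thesis using k x(1) unfolding x'_def chainx_def by simp
    qed
  qed
  moreover have "x' (Suc l) = u" unfolding x'_def by simp
  ultimately show ?case by blast
qed

lemma chainx_mono: "chainx X d i e l x \<Longrightarrow> k \<le> l \<Longrightarrow> chainx X d i e k x"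
  unfolding chainx_def by auto

lemma minimal_strand:
  assumes cc: "chain_complex s X d" and fp: "\<forall>n. FPc (X n) (g n)" and fin: "\<forall>n\<ge>N. X n = {0}"
    and mn: "\<forall>n. \<forall>y\<in>X (Suc n). \<exists>z\<in>X n. d n y = s r z"
    and Xi: "X i \<noteq> {0}" and below: "\<forall>n<i. X n = {0}"
  shows "\<exists>j x \<phi>. strand X d i j x \<phi> \<and> (\<forall>l<j. d (i+l) (x (Suc l)) = s ((-1)^i * r) (x l))"
proof -
  define e :: 'a where "e = (-1)^i"
  have ee: "e * e = 1" unfolding e_def by (simp add: power_mult_distrib[symmetric])
  obtain x0 where x0: "x0 \<in> X i" "\<forall>z\<in>X i. x0 \<noteq> s r z" using exists_nonr[OF cc_sub[OF cc] Xi] by blast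
  obtain \<pi> where \<pi>: "lfun (X i) \<pi>" "\<pi> x0 = 1" using split_fun[OF fp[rule_format] x0] by blast
  have dlast: "d (i-1) z = 0" if "0 < i" "z \<in> X i" for z
  proof -
    have "d (i-1) z \<in> X (i-1)" using cc_map[OF cc, of z "i-1"] that by simp
    then show ?thesis using below that by auto
  qed
  show ?thesis
  proof (cases "r = 0")
    case True
    have "strand X d i 0 (\<lambda>_. x0) (\<lambda>_. \<pi>)" unfolding strand_def
    proof (intro conjI allI impI ballI)
      fix u assume "u \<in> X (Suc (i + 0))"
      then obtain z where "d i u = s r z" using mn by force
      then show "\<pi> (d (i + 0) u) = 0" using True lfun_zero[OF cc_sub[OF cc] \<pi>(1)] by simp
    next
      assume "0 < i" then show "d (i - 1) x0 = 0" using dlast x0(1) by simp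
    qed (use x0 \<pi> in auto)
    then show ?thesis by (intro exI) auto
  next
    case False
    define P where "P l f \<psi> \<longleftrightarrow> lfun (X (Suc (i+l))) \<psi> \<and> (\<forall>z\<in>X (Suc (i+l)). f (d (i+l) z) = e * r * \<psi> z)"
      for l f \<psi>
    define \<Phi> where "\<Phi> = rec_nat \<pi> (\<lambda>l f. SOME \<psi>. P l f \<psi>)"
    have \<Phi>0: "\<Phi> 0 = \<pi>" unfolding \<Phi>_def by simp
    have \<Phi>S: "\<Phi> (Suc l) = (SOME \<psi>. P l (\<Phi> l) \<psi>)" for l unfolding \<Phi>_def by simp
    have step: "\<exists>\<psi>. P l f \<psi>" if "lfun (X (i+l)) f" for l f
    proof -
      define \<psi>' where "\<psi>' z = e * f (d (i+l) z)" for z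
      have L: "lfun (X (Suc (i+l))) \<psi>'" unfolding lfun_def \<psi>'_def
        using cc_map[OF cc] cc_add[OF cc] cc_scale[OF cc] lfun_add[OF that] lfun_scale[OF that]
        by (simp add: algebra_simps)
      have M: "\<forall>z\<in>X (Suc (i+l)). \<psi>' z \<in> mm"
      proof
        fix z assume "z \<in> X (Suc (i+l))"
        then obtain w where "w \<in> X (i+l)" "d (i+l) z = s r w" using mn by blast
        then have "\<psi>' z = r * (e * f w)" unfolding \<psi>'_def using lfun_scale[OF that] by (simp add: mult_ac)
        then show "\<psi>' z \<in> mm" by (auto simp: mm_iff)
      qed
      obtain \<psi> where \<psi>: "lfun (X (Suc (i+l))) \<psi>" "\<forall>z\<in>X (Suc (i+l)). \<psi>' z = r * \<psi> z"
        using lift_fun[OF fp[rule_format] L M] by blast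
      have "f (d (i+l) z) = e * r * \<psi> z" if "z \<in> X (Suc (i+l))" for z
      proof -
        have "e * f (d (i+l) z) = r * \<psi> z" using \<psi>(2) that unfolding \<psi>'_def by simp
        then have "e * (e * f (d (i+l) z)) = e * (r * \<psi> z)" by simp
        then show ?thesis using ee by (simp add: mult.assoc[symmetric])
      qed
      then show ?thesis unfolding P_def using \<psi>(1) by blast
    qed
    have \<Phi>ok: "lfun (X (i+l)) (\<Phi> l) \<and> P l (\<Phi> l) (\<Phi> (Suc l))" for l
    proof (induct l)
      case 0
      have "lfun (X (i+0)) (\<Phi> 0)" using \<Phi>0 \<pi>(1) by simp
      then show ?case unfolding \<Phi>S using someI_ex[OF step] by blast
    next
      case (Suc l)
      then have "lfun (X (i + Suc l)) (\<Phi> (Suc l))" unfolding P_def by simp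
      then show ?case unfolding \<Phi>S[of "Suc l"] using someI_ex[OF step] by blast
    qed
    have \<Phi>lin: "lfun (X (i+l)) (\<Phi> l)" for l using \<Phi>ok by blast
    have \<Phi>d: "\<Phi> l (d (i+l) z) = e * r * \<Phi> (Suc l) z" if "z \<in> X (Suc (i+l))" for l z
      using \<Phi>ok[of l] that unfolding P_def by blast
    have inv: "chainx X d i e l x \<Longrightarrow> \<Phi> l (x l) - \<Phi> 0 (x 0) \<in> mm" for l x
    proof (induct l)
      case 0 then show ?case using mm_mult[OF r_in, of 0] by simp
    next
      case (Suc l)
      have cl: "chainx X d i e l x" using chainx_mono[OF Suc(2)] by simp
      have xs: "x (Suc l) \<in> X (Suc (i+l))" "x l \<in> X (i+l)" and dx: "d (i+l) (x (Suc l)) = s (e*r) (x l)"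
        using Suc(2) unfolding chainx_def by auto
      have "e * r * \<Phi> (Suc l) (x (Suc l)) = e * r * \<Phi> l (x l)"
        using \<Phi>d[OF xs(1)] dx lfun_scale[OF \<Phi>lin xs(2)] by simp
      then have "e * (e * (r * (\<Phi> (Suc l) (x (Suc l)) - \<Phi> l (x l)))) = 0" by (simp add: algebra_simps)
      then have "r * (\<Phi> (Suc l) (x (Suc l)) - \<Phi> l (x l)) = 0" using ee by (simp add: mult.assoc[symmetric])
      then have "\<Phi> (Suc l) (x (Suc l)) - \<Phi> l (x l) \<in> mm" using ann_r False by blast
      from mm_add[OF this Suc(1)[OF cl]] show ?case by simp
    qed
    define L where "L = {l. \<exists>x. chainx X d i e l x \<and> \<Phi> 0 (x 0) \<notin> mm}"
    have nm: "\<Phi> l (x l) \<notin> mm" if "chainx X d i e l x" "\<Phi> 0 (x 0) \<notin> mm" for l x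
    proof
      assume "\<Phi> l (x l) \<in> mm"
      then have "\<Phi> l (x l) - (\<Phi> l (x l) - \<Phi> 0 (x 0)) \<in> mm" using mm_diff inv[OF that(1)] by blast
      then show False using that(2) by simp
    qed
    have LN: "L \<subseteq> {..<N}"
    proof
      fix l assume "l \<in> L"
      then obtain x where x: "chainx X d i e l x" "\<Phi> 0 (x 0) \<notin> mm" unfolding L_def by blast
      have "x l \<in> X (i+l)" using x(1) unfolding chainx_def by simp
      moreover have "x l \<noteq> 0"
      proof
        assume "x l = 0"
        then have "\<Phi> l (x l) = 0" using lfun_zero[OF cc_sub[OF cc] \<Phi>lin] by simp
        then show False using nm[OF x] mm_mult[OF r_in, of 0] by simp
      qed
      ultimately have "\<not> N \<le> i + l" using fin by auto
      then show "l \<in> {..<N}" by simp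
    qed
    have "0 \<in> L" unfolding L_def chainx_def using x0(1) \<pi>(2) \<Phi>0 one_notin
      by (intro CollectI exI[of _ "\<lambda>_. x0"]) simp
    define j where "j = Max L"
    have fL: "finite L" using LN finite_subset by blast
    have jL: "j \<in> L" unfolding j_def using fL \<open>0 \<in> L\<close> by (intro Max_in) auto
    have jmax: "l \<in> L \<Longrightarrow> l \<le> j" for l unfolding j_def using fL by simp
    obtain x where x: "chainx X d i e j x" "\<Phi> 0 (x 0) \<notin> mm" using jL unfolding L_def by blast
    have unit: "\<exists>v. \<Phi> l (x l) * v = 1" if "l \<le> j" for l
      using nm[OF chainx_mono[OF x(1) that] x(2)] notin_unit by blast
    then obtain v where v: "\<And>l. l \<le> j \<Longrightarrow> \<Phi> l (x l) * v l = 1" by metis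
    define \<phi> where "\<phi> l z = v l * \<Phi> l z" for l z
    have xX: "x l \<in> X (i+l)" if "l \<le> j" for l using x(1) that unfolding chainx_def by simp
    have dx: "d (i+l) (x (Suc l)) = s (e*r) (x l)" if "l < j" for l using x(1) that unfolding chainx_def by simp
    have "strand X d i j x \<phi>" unfolding strand_def
    proof (intro conjI allI impI ballI)
      fix l assume l: "l \<le> j"
      show "x l \<in> X (i + l)" using xX[OF l] .
      show "lfun (X (i + l)) (\<phi> l)" unfolding \<phi>_def lfun_def
        using lfun_add[OF \<Phi>lin] lfun_scale[OF \<Phi>lin] by (simp add: algebra_simps)
      show "\<phi> l (x l) = 1" unfolding \<phi>_def using v[OF l] by (simp add: mult.commute)
    next
      fix l z assume l: "l < j" and z: "z \<in> X (Suc (i + l))" and z0: "\<phi> (Suc l) z = 0"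
      have "\<Phi> (Suc l) (x (Suc l)) * (v (Suc l) * \<Phi> (Suc l) z) = 0" using z0 unfolding \<phi>_def by simp
      then have "\<Phi> (Suc l) (x (Suc l)) * v (Suc l) * \<Phi> (Suc l) z = 0" by (simp add: mult.assoc)
      then have "\<Phi> (Suc l) z = 0" using v[of "Suc l"] l by simp
      then show "\<phi> l (d (i + l) z) = 0" unfolding \<phi>_def using \<Phi>d[OF z] by simp
    next
      fix u assume u: "u \<in> X (Suc (i + j))"
      have "\<Phi> (Suc j) u \<in> mm"
      proof (rule ccontr)
        assume nmu: "\<Phi> (Suc j) u \<notin> mm"
        obtain y where y: "chainx X d i e (Suc j) y" "y (Suc j) = u"
          using chain_exists[OF cc mn ee, where u=u and i=i and l="Suc j"] u by auto
        have "\<Phi> 0 (y 0) \<notin> mm"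
        proof
          assume "\<Phi> 0 (y 0) \<in> mm"
          then have "(\<Phi> (Suc j) (y (Suc j)) - \<Phi> 0 (y 0)) + \<Phi> 0 (y 0) \<in> mm" using mm_add inv[OF y(1)] by blast
          then show False using nmu y(2) by simp
        qed
        then have "Suc j \<in> L" unfolding L_def using y(1) by blast
        then show False using jmax by fastforce
      qed
      then have "r * \<Phi> (Suc j) u = 0" using r_times_mm by blast
      then show "\<phi> j (d (i + j) u) = 0" unfolding \<phi>_def using \<Phi>d[OF u] by (simp add: mult_ac)
    next
      fix l assume "l < j" then show "\<exists>c. d (i + l) (x (Suc l)) = s c (x l)" using dx by blast
    next
      assume "0 < i" then show "d (i - 1) (x 0) = 0" using dlast xX[of 0] by simp
    qed
    then show ?thesis using dx unfolding e_def by blast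
  qed
qed


lemma zero_case:
  assumes cc: "chain_complex s X d" and z: "\<forall>n. X n = {0}"
  shows "\<exists>P Q. complex_direct_sum s X d P Q \<and> chain_acyclic P d \<and>
           (\<exists>N ii jj. chain_iso s Q d fscale (sumE_mod N ii jj) (sumE_diff r ii))"
proof -
  define Z where "Z = (\<lambda>n::nat. {0::'m})"
  have d0: "d n 0 = 0" for n using cc_zero[OF cc] .
  have sX: "subcomplex s X X d" unfolding subcomplex_def using cc_sub[OF cc] z d0 by auto
  have sZ: "subcomplex s Z X d" unfolding subcomplex_def Z_def using z d0 by auto
  have "complex_direct_sum s X d X Z" unfolding complex_direct_sum_def using sX sZ z unfolding Z_def by auto
  moreover have "chain_acyclic X d" unfolding chain_acyclic_def cycles_def using z d0 by auto
  moreover have "chain_iso s Z d fscale (sumE_mod 0 ii jj) (sumE_diff r ii)" for ii jj :: "nat \<Rightarrow> nat"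
  proof -
    have S0: "sumE_mod 0 ii jj n = {0::nat \<Rightarrow> 'a}" for n unfolding sumE_mod_def by (auto simp: fun_eq_iff)
    show ?thesis unfolding chain_iso_def
      by (intro exI[of _ "\<lambda>n z. 0"]) (auto simp: Z_def S0 bij_betw_def linear_on_def fscale_def sumE_diff_def fun_eq_iff)
  qed
  ultimately show ?thesis by blast
qed

lemma main:
  assumes "chain_complex s X d" "\<forall>n\<ge>N. X n = {0}" "\<forall>n. FPc (X n) (g n)" "(\<Sum>n<N. g n) \<le> K"
  shows "\<exists>P Q. complex_direct_sum s X d P Q \<and> chain_acyclic P d \<and>
           (\<exists>N ii jj. chain_iso s Q d fscale (sumE_mod N ii jj) (sumE_diff r ii))"
  using assms
proof (induct K arbitrary: X g rule: less_induct)
  case (less K X g)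
  note cc = less(2) and fin = less(3) and fp = less(4) and sm = less(5)
  show ?case
  proof (cases "\<forall>n. X n = {0}")
    case True then show ?thesis using zero_case[OF cc] by blast
  next
    case False
    have "\<exists>i j x \<phi>. strand X d i j x \<phi> \<and> ((j = 1 \<and> d i (x 1) = x 0) \<or> (\<forall>l<j. d (i+l) (x (Suc l)) = s ((-1)^i * r) (x l)))"
    proof (cases "\<exists>n y. y \<in> X (Suc n) \<and> (\<forall>z\<in>X n. d n y \<noteq> s r z)")
      case True
      then obtain n y where "y \<in> X (Suc n)" "\<forall>z\<in>X n. d n y \<noteq> s r z" by blast
      from unit_strand[OF cc fp[rule_format] this] show ?thesis by blast
    next
      case nu: False
      then have mn: "\<forall>n. \<forall>y\<in>X (Suc n). \<exists>z\<in>X n. d n y = s r z" by blast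
      define i where "i = (LEAST n. X n \<noteq> {0})"
      have Xi: "X i \<noteq> {0}" unfolding i_def using False by (metis (mono_tags, lifting) LeastI)
      have below: "\<forall>n<i. X n = {0}" unfolding i_def using not_less_Least by blast
      from minimal_strand[OF cc fp fin mn Xi below] show ?thesis by blast
    qed
    then obtain i j x \<phi> where st: "strand X d i j x \<phi>"
      and ty: "(j = 1 \<and> d i (x 1) = x 0) \<or> (\<forall>l<j. d (i+l) (x (Suc l)) = s ((-1)^i * r) (x l))" by blast
    define Y where "Y = Ymod X i j \<phi>"
    define A where "A = Amod i j x"
    have XAY: "complex_direct_sum s X d A Y" unfolding A_def Y_def using strand_split[OF cc st] .
    have sY: "subcomplex s Y X d" using XAY unfolding complex_direct_sum_def by blast
    have ccY: "chain_complex s Y d" using sub_cc[OF cc sY] .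
    define g' where "g' n = (if i \<le> n \<and> n \<le> i + j then g n - 1 else g n)" for n
    have fpY: "FPc (Y n) (g' n)" and g1: "i \<le> n \<and> n \<le> i + j \<longrightarrow> g n \<ge> 1" for n
      using strand_FP[OF cc st, where g=g and n=n] fp unfolding Y_def g'_def by blast+
    have finY: "\<forall>n\<ge>N. Y n = {0}"
    proof (intro allI impI)
      fix n assume "N \<le> n"
      then have "X n = {0}" using fin by blast
      moreover have "Y n \<subseteq> X n" "0 \<in> Y n" using subcomplexD(2)[OF sY] subspace_0[OF subcomplexD(1)[OF sY]] by auto
      ultimately show "Y n = {0}" by blast
    qed
    have iN: "i < N"
    proof (rule ccontr)
      assume "\<not> i < N"
      then have "X i = {0}" using fin by simp
      then show False using strand_x0[OF st cc] by simp
    qed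
    have "(\<Sum>n<N. g' n) < (\<Sum>n<N. g n)"
    proof (rule sum_strict_mono_ex1)
      show "\<forall>n\<in>{..<N}. g' n \<le> g n" unfolding g'_def by auto
      show "\<exists>n\<in>{..<N}. g' n < g n" using iN g1[of i] unfolding g'_def by (intro bexI[of _ i]) auto
    qed simp
    then have "(\<Sum>n<N. g' n) < K" using sm by simp
    from less(1)[OF this ccY finY allI[OF fpY] order_refl]
    obtain P' Q' N' ii jj where YPQ: "complex_direct_sum s Y d P' Q'" and aP: "chain_acyclic P' d"
      and iso: "chain_iso s Q' d fscale (sumE_mod N' ii jj) (sumE_diff r ii)" by blast
    from ty show ?thesis
    proof
      assume "j = 1 \<and> d i (x 1) = x 0"
      then have aA: "chain_acyclic A d" unfolding A_def using strand_acyc[OF cc] st by blast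
      have sP: "subcomplex s P' Y d" using YPQ unfolding complex_direct_sum_def by blast
      have "complex_direct_sum s X d (psum A P') Q'" using cds_assoc[OF cc XAY YPQ] .
      moreover have "chain_acyclic (psum A P') d" using acyc_sum[OF cc XAY sP aA aP] .
      ultimately show ?thesis using iso by blast
    next
      assume Ed: "\<forall>l<j. d (i+l) (x (Suc l)) = s ((-1)^i * r) (x l)"
      have "complex_direct_sum s X d (psum A Q') P'" using cds_assoc[OF cc XAY cds_comm[OF YPQ]] .
      then have "complex_direct_sum s X d P' (psum A Q')" by (rule cds_comm)
      moreover have "chain_iso s (psum A Q') d fscale (sumE_mod (Suc N') (ii(N':=i)) (jj(N':=j))) (sumE_diff r (ii(N':=i)))"
        unfolding A_def using E_iso[OF cc st Ed] YPQ iso unfolding Y_def by blast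
      ultimately show ?thesis using aP by blast
    qed
  qed
qed

end

theorem lemma5p2:
  fixes m :: "'a::comm_ring_1 set" and r :: 'a
    and s :: "'a \<Rightarrow> 'm::ab_group_add \<Rightarrow> 'm"
    and X :: "nat \<Rightarrow> 'm set" and d :: "nat \<Rightarrow> 'm \<Rightarrow> 'm"
  assumes local: "maximal_ideal m" "\<forall>J. maximal_ideal J \<longrightarrow> J = m"
    and principal: "m = {r * a | a. True}"
    and sq_zero: "\<forall>x\<in>m. \<forall>y\<in>m. x * y = 0"
    and perf: "perfect_complex s X d"
  shows "\<exists>P Q. complex_direct_sum s X d P Q \<and> chain_acyclic P d \<and>
           (\<exists>N ii jj. chain_iso s Q d fscale (sumE_mod N ii jj) (sumE_diff r ii))"
proof -
  have cc: "chain_complex s X d" using perf unfolding perfect_complex_def by blast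
  have ms: "module s" using cc unfolding chain_complex_def by blast
  interpret setting s m r
    by (rule setting.intro[OF ms setting_axioms.intro[OF local(1) principal sq_zero]])
  have "\<forall>n. \<exists>k. FPc (X n) k"
  proof
    fix n
    have "projective_mod s (X n)" "fin_gen s (X n)" using perf unfolding perfect_complex_def by auto
    then show "\<exists>k. FPc (X n) k" by (rule init_FP)
  qed
  then have "\<exists>g. \<forall>n. FPc (X n) (g n)" by (rule choice)
  then obtain g where g: "\<forall>n. FPc (X n) (g n)" by (rule exE)
  have "\<exists>N. \<forall>n\<ge>N. X n = {0}" using perf unfolding perfect_complex_def by (elim conjE)
  then obtain N where N: "\<forall>n\<ge>N. X n = {0}" by (rule exE)
  show ?thesis using main[OF cc N g order_refl] .
qed

end
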